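(* (Restricted sum formula) For any positive integers $k,n,m$ with $k\ge n$, $$\sum_{\substack{k_1+\cdots+k_n=k\\ k_i\ge1}}\zeta^t(2mk_1,\ldots,2mk_n)=\left\{\sum_{i=1}^n\left[\sum_{j=0}^{k-i}\binom{k-j}{i}\sum_{\substack{n_0+\cdots+n_{m-1}=mj,\ l_0+\cdots+l_{m-1}=m(k-j)\\ n_p,l_p\ge0}}\prod_{p=0}^{m-1}\frac{\beta_{2n_p}}{(2n_p)!(2l_p+1)!}\,\rho_m^{\sum_{p=0}^{m-1}2p(n_p+l_p)}\right](-1)^i\binom{k-i}{k-n}t^{n-i}\right\}\frac{\lambda^{2km}}{4^{km}},$$ where $\rho_m=e^{\pi\sqrt{-1}/m}$, $\lambda=2\pi\sqrt{-1}$ and $\beta_{2l}=B_{2l}(2-4^l)$.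
   Context: $B_n$ are the Bernoulli numbers, $u/(e^u-1)=\sum_{n\ge0}B_nu^n/n!$; $t$ is a variable. For positive integers with $k_1\ge2$, $\zeta(k_1,\ldots,k_n)=\sum_{m_1>\cdots>m_n>0}\prod m_j^{-k_j}$ and the interpolated multiple zeta value is $\zeta^t(k_1,\ldots,k_n)=\sum_{\mathbf p}t^{n-\mathrm{dep}(\mathbf p)}\zeta(\mathbf p)$, summed over all sequences $\mathbf p$ obtained from $(k_1,\ldots,k_n)$ by replacing each separating comma by either a comma or a plus sign ($\mathrm{dep}$ = length). *)

theory Defs
  imports "HOL-Analysis.Analysis" "HOL-Computational_Algebra.Formal_Power_Series"
begin

definition bernoulli :: "nat \<Rightarrow> real" where
  "bernoulli n = fact n * fps_nth (fps_X / (fps_exp 1 - 1)) n"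

text \<open>beta_{2l} = B_{2l} (2 - 4^l); argument is l\<close>
definition beta2 :: "nat \<Rightarrow> real" where
  "beta2 l = bernoulli (2*l) * (2 - 4^l)"

definition mzv :: "nat list \<Rightarrow> real" where
  "mzv ks = (\<Sum>\<^sub>\<infinity> ms \<in> {ms. length ms = length ks \<and> sorted_wrt (>) ms \<and> (\<forall>x\<in>set ms. x > 0)}.
              \<Prod>j<length ks. 1 / real (ms ! j) ^ (ks ! j))"

text \<open>All sequences obtained by replacing each separating comma by a comma or a plus sign\<close>
fun merges :: "nat list \<Rightarrow> nat list list" where
  "merges [] = [[]]"
| "merges [a] = [[a]]"
| "merges (a # b # rest) =
     map (\<lambda>l. a # l) (merges (b # rest)) @ map (\<lambda>l. (a + hd l) # tl l) (merges (b # rest))"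

definition mzv_t :: "complex \<Rightarrow> nat list \<Rightarrow> complex" where
  "mzv_t t ks = (\<Sum>p \<leftarrow> merges ks. t ^ (length ks - length p) * complex_of_real (mzv p))"

end

theory Submission
  imports Defs "HOL-Computational_Algebra.Fundamental_Theorem_Algebra"
    "HOL-Computational_Algebra.Polynomial_FPS"
begin

no_notation vec_nth (infixl \<open>$\<close> 90)
notation fps_nth (infixl \<open>$\<close> 75)

fun Zt :: "nat \<Rightarrow> nat list \<Rightarrow> real" where
  "Zt N [] = 1"
| "Zt N (k # ks) = (\<Sum>j=1..N. 1 / real j ^ k * Zt (j - 1) ks)"

lemma Zt_0 [simp]: "Zt 0 (k # ks) = 0" by simp

lemma Zt_Suc: "Zt (Suc N) (k # ks) = Zt N (k # ks) + 1 / real (Suc N) ^ k * Zt N ks"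
  by simp

lemma Zt_nonneg: "Zt N ks \<ge> 0"
proof (induction ks arbitrary: N)
  case (Cons k ks)
  then show ?case by (auto intro!: sum_nonneg)
qed simp

lemma Zt_mono_Suc: "Zt N ks \<le> Zt (Suc N) ks"
  by (cases ks) (auto simp: Zt_nonneg)

lemma Zt_mono: "N \<le> M \<Longrightarrow> Zt N ks \<le> Zt M ks"
  by (induction M rule: dec_induct) (auto intro: order_trans Zt_mono_Suc)

lemma inv_sq_sum_bound: "(\<Sum>j=1..N. 1 / real j ^ 2) \<le> 2 - 1 / real (max N 1)"
proof (induction N)
  case 0 then show ?case by simp
next
  case (Suc N)
  show ?case
  proof (cases "N = 0")
    case True then show ?thesis by simp
  next
    case False
    have "1 / real (Suc N) ^ 2 \<le> 1 / real N - 1 / real (Suc N)"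
    proof -
      have "real N * (real N + 1) \<le> (real N + 1) ^ 2" by (simp add: power2_eq_square algebra_simps)
      then have "1 / (real N + 1) ^ 2 \<le> 1 / (real N * (real N + 1))"
        using False by (intro divide_left_mono) auto
      also have "\<dots> = 1 / real N - 1 / (real N + 1)" using False by (simp add: field_simps)
      finally show ?thesis by (simp add: add.commute)
    qed
    then show ?thesis using Suc False by simp
  qed
qed

lemma inv_pow_sum_bound:
  assumes "k \<ge> 2" shows "(\<Sum>j=1..N. 1 / real j ^ k) \<le> 2"
proof -
  have "(\<Sum>j=1..N. 1 / real j ^ k) \<le> (\<Sum>j=1..N. 1 / real j ^ 2)"
  proof (intro sum_mono)
    fix j assume "j \<in> {1..N}"
    then have "real j ^ 2 \<le> real j ^ k" using assms
      by (intro power_increasing) auto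
    then show "1 / real j ^ k \<le> 1 / real j ^ 2"
      using \<open>j \<in> {1..N}\<close> by (intro divide_left_mono) auto
  qed
  also have "\<dots> \<le> 2" using inv_sq_sum_bound[of N] by (smt (verit) divide_nonneg_nonneg of_nat_0_le_iff)
  finally show ?thesis .
qed

lemma Zt_bound: "\<forall>k\<in>set ks. k \<ge> 2 \<Longrightarrow> Zt N ks \<le> 2 ^ length ks"
proof (induction ks arbitrary: N)
  case Nil then show ?case by simp
next
  case (Cons k ks)
  have "Zt N (k # ks) = (\<Sum>j=1..N. 1 / real j ^ k * Zt (j - 1) ks)" by simp
  also have "\<dots> \<le> (\<Sum>j=1..N. 1 / real j ^ k * 2 ^ length ks)"
    using Cons by (intro sum_mono mult_left_mono) auto
  also have "\<dots> = (\<Sum>j=1..N. 1 / real j ^ k) * 2 ^ length ks"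
    by (simp add: sum_distrib_right)
  also have "\<dots> \<le> 2 * 2 ^ length ks"
    using Cons.prems inv_pow_sum_bound[of k N] by (intro mult_right_mono) auto
  finally show ?case by simp
qed

definition Lset :: "nat \<Rightarrow> nat \<Rightarrow> nat list set" where
  "Lset r N = {ms. length ms = r \<and> sorted_wrt (>) ms \<and> (\<forall>x\<in>set ms. 0 < x \<and> x \<le> N)}"

definition mterm :: "nat list \<Rightarrow> nat list \<Rightarrow> real" where
  "mterm ks ms = (\<Prod>j<length ks. 1 / real (ms ! j) ^ (ks ! j))"

lemma Lset_0: "Lset 0 N = {[]}" by (auto simp: Lset_def)

lemma Lset_Suc: "Lset (Suc r) N = (\<lambda>(j, ms). j # ms) ` (SIGMA j:{1..N}. Lset r (j - 1))"
proof safe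
  fix ms assume "ms \<in> Lset (Suc r) N"
  then obtain j ms' where ms: "ms = j # ms'" unfolding Lset_def by (cases ms) auto
  with \<open>ms \<in> Lset (Suc r) N\<close> have "j \<in> {1..N}" "ms' \<in> Lset r (j - 1)"
    by (auto simp: Lset_def)
  then show "ms \<in> (\<lambda>(j, ms). j # ms) ` (SIGMA j:{1..N}. Lset r (j - 1))"
    using ms by force
next
  fix j ms assume "j \<in> {1..N}" "ms \<in> Lset r (j - 1)"
  then show "j # ms \<in> Lset (Suc r) N" by (auto simp: Lset_def)
qed

lemma finite_Lset: "finite (Lset r N)"
  by (induction r arbitrary: N) (auto simp: Lset_0 Lset_Suc)

lemma sum_Lset: "(\<Sum>ms\<in>Lset (length ks) N. mterm ks ms) = Zt N ks"
proof (induction ks arbitrary: N)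
  case Nil then show ?case by (simp add: Lset_0 mterm_def)
next
  case (Cons k ks)
  have inj: "inj_on (\<lambda>(j, ms). j # ms) (SIGMA j:{1..N}. Lset (length ks) (j - 1))"
    by (auto simp: inj_on_def)
  have "(\<Sum>ms\<in>Lset (length (k # ks)) N. mterm (k # ks) ms)
      = (\<Sum>(j, ms)\<in>(SIGMA j:{1..N}. Lset (length ks) (j - 1)). mterm (k # ks) (j # ms))"
    unfolding Lset_Suc length_Cons by (subst sum.reindex[OF inj]) (simp add: case_prod_unfold)
  also have "\<dots> = (\<Sum>j=1..N. \<Sum>ms\<in>Lset (length ks) (j - 1). mterm (k # ks) (j # ms))"
    by (subst sum.Sigma) (auto simp: finite_Lset)
  also have "\<dots> = (\<Sum>j=1..N. 1 / real j ^ k * Zt (j - 1) ks)"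
  proof (intro sum.cong refl)
    fix j
    have "(\<Sum>ms\<in>Lset (length ks) (j - 1). mterm (k # ks) (j # ms))
        = (\<Sum>ms\<in>Lset (length ks) (j - 1). 1 / real j ^ k * mterm ks ms)"
      unfolding mterm_def length_Cons prod.lessThan_Suc_shift
      by (intro sum.cong refl) (simp add: nth_Cons_Suc)
    also have "\<dots> = 1 / real j ^ k * Zt (j - 1) ks"
      by (simp only: sum_distrib_left[symmetric] Cons.IH)
    finally show "(\<Sum>ms\<in>Lset (length ks) (j - 1). mterm (k # ks) (j # ms)) = 1 / real j ^ k * Zt (j - 1) ks" .
  qed
  finally show ?case by simp
qed

lemma mterm_nonneg: "mterm ks ms \<ge> 0"
  by (auto simp: mterm_def intro!: prod_nonneg)

lemma mzv_limit:
  assumes "\<forall>k\<in>set ks. k \<ge> 2"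
  shows "(\<lambda>N. Zt N ks) \<longlonglongrightarrow> mzv ks"
proof -
  define A :: "nat list set" where "A = {ms. length ms = length ks \<and> sorted_wrt (>) ms \<and> (\<forall>x\<in>set ms. x > 0)}"
  have mzv: "mzv ks = infsum (mterm ks) A"
    unfolding mzv_def A_def mterm_def[abs_def] ..
  have sub: "\<exists>N. F \<subseteq> Lset (length ks) N" if "finite F" "F \<subseteq> A" for F
  proof -
    define N where "N = Max (insert 0 (\<Union>ms\<in>F. set ms))"
    have fin: "finite (insert 0 (\<Union>ms\<in>F. set ms))" using that by auto
    have "\<forall>ms\<in>F. \<forall>x\<in>set ms. x \<le> N"
    proof (intro ballI)
      fix ms x assume "ms \<in> F" "x \<in> set ms"
      then show "x \<le> N" unfolding N_def using fin by (intro Max_ge) auto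
    qed
    then show ?thesis using that by (auto simp: Lset_def A_def intro!: exI[of _ N])
  qed
  have LA: "Lset (length ks) N \<subseteq> A" for N unfolding Lset_def A_def by blast
  have bdd: "sum (mterm ks) F \<le> 2 ^ length ks" if FA: "finite F" "F \<subseteq> A" for F
  proof -
    obtain N where "F \<subseteq> Lset (length ks) N" using sub[OF FA] by (elim exE)
    then have "sum (mterm ks) F \<le> sum (mterm ks) (Lset (length ks) N)"
      by (intro sum_mono2 finite_Lset mterm_nonneg)
    also have "\<dots> = Zt N ks" by (rule sum_Lset)
    also have "\<dots> \<le> 2 ^ length ks" using assms by (rule Zt_bound)
    finally show ?thesis .
  qed
  have bddS: "bdd_above (sum (mterm ks) ` {F. F \<subseteq> A \<and> finite F})"
    unfolding bdd_above_def using bdd by blast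
  have summ: "mterm ks summable_on A"
    by (rule nonneg_bdd_above_summable_on[OF _ bddS]) (simp add: mterm_nonneg)
  have inf: "infsum (mterm ks) A = (SUP F\<in>{F. finite F \<and> F \<subseteq> A}. sum (mterm ks) F)"
    by (rule infsum_nonneg_is_SUPREMUM_real[OF summ]) (auto simp: mterm_nonneg)
  have bddZ: "bdd_above (range (\<lambda>N. Zt N ks))"
    using Zt_bound[OF assms] by (auto simp: bdd_above_def)
  have lim: "(\<lambda>N. Zt N ks) \<longlonglongrightarrow> (SUP N. Zt N ks)"
    by (intro LIMSEQ_incseq_SUP bddZ) (auto simp: incseq_def Zt_mono)
  have "(SUP F\<in>{F. finite F \<and> F \<subseteq> A}. sum (mterm ks) F) = (SUP N. Zt N ks)"
  proof (rule antisym)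
    show "(SUP F\<in>{F. finite F \<and> F \<subseteq> A}. sum (mterm ks) F) \<le> (SUP N. Zt N ks)"
    proof (rule cSUP_least)
      show "{F. finite F \<and> F \<subseteq> A} \<noteq> {}" by auto
      fix F assume "F \<in> {F. finite F \<and> F \<subseteq> A}"
      then have FA: "finite F" "F \<subseteq> A" by auto
      obtain N where "F \<subseteq> Lset (length ks) N" using sub[OF FA] by (elim exE)
      then have "sum (mterm ks) F \<le> sum (mterm ks) (Lset (length ks) N)"
        by (intro sum_mono2 finite_Lset mterm_nonneg)
      then have "sum (mterm ks) F \<le> Zt N ks" by (simp only: sum_Lset)
      also have "\<dots> \<le> (SUP N. Zt N ks)" by (intro cSUP_upper bddZ) auto
      finally show "sum (mterm ks) F \<le> (SUP N. Zt N ks)" .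
    qed
    show "(SUP N. Zt N ks) \<le> (SUP F\<in>{F. finite F \<and> F \<subseteq> A}. sum (mterm ks) F)"
    proof (rule cSUP_least)
      fix N
      have "Zt N ks = sum (mterm ks) (Lset (length ks) N)" by (simp add: sum_Lset)
      also have "\<dots> \<le> (SUP F\<in>{F. finite F \<and> F \<subseteq> A}. sum (mterm ks) F)"
      proof (rule cSUP_upper)
        show "Lset (length ks) N \<in> {F. finite F \<and> F \<subseteq> A}" using LA finite_Lset by blast
        show "bdd_above (sum (mterm ks) ` {F. finite F \<and> F \<subseteq> A})"
          using bddS by (simp add: conj_commute)
      qed
      finally show "Zt N ks \<le> \<dots>" .
    qed simp
  qed
  with lim inf mzv show ?thesis by simp
qed


definition comp :: "nat \<Rightarrow> nat \<Rightarrow> nat list set" where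
  "comp k r = {ks. length ks = r \<and> (\<forall>x\<in>set ks. x \<ge> 1) \<and> sum_list ks = k}"

lemma comp_0: "comp k 0 = (if k = 0 then {[]} else {})"
  by (auto simp: comp_def)

lemma comp_Suc: "comp k (Suc r) = (\<lambda>(a, q). a # q) ` (SIGMA a:{1..k}. comp (k - a) r)"
proof safe
  fix ks assume "ks \<in> comp k (Suc r)"
  then obtain a q where ks: "ks = a # q" unfolding comp_def by (cases ks) auto
  with \<open>ks \<in> comp k (Suc r)\<close> have "a \<in> {1..k}" "q \<in> comp (k - a) r"
    by (auto simp: comp_def)
  then show "ks \<in> (\<lambda>(a, q). a # q) ` (SIGMA a:{1..k}. comp (k - a) r)"
    using ks by force
next
  fix a q assume "a \<in> {1..k}" "q \<in> comp (k - a) r"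
  then show "a # q \<in> comp k (Suc r)" by (auto simp: comp_def)
qed

lemma finite_comp: "finite (comp k r)"
  by (induction r arbitrary: k) (auto simp: comp_0 comp_Suc)

lemma sum_comp_Suc:
  "(\<Sum>p\<in>comp k (Suc r). f p) = (\<Sum>a=1..k. \<Sum>q\<in>comp (k - a) r. f (a # q))"
proof -
  have inj: "inj_on (\<lambda>(a, q). a # q) (SIGMA a:{1..k}. comp (k - a) r)"
    by (auto simp: inj_on_def)
  have "(\<Sum>p\<in>comp k (Suc r). f p) = (\<Sum>(a, q)\<in>(SIGMA a:{1..k}. comp (k - a) r). f (a # q))"
    unfolding comp_Suc by (subst sum.reindex[OF inj]) (simp add: case_prod_unfold)
  also have "\<dots> = (\<Sum>a=1..k. \<Sum>q\<in>comp (k - a) r. f (a # q))"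
    by (subst sum.Sigma) (auto simp: finite_comp)
  finally show ?thesis .
qed

lemma comp_empty: "k < r \<Longrightarrow> comp k r = {}"
proof (induction r arbitrary: k)
  case (Suc r)
  then show ?case by (auto simp: comp_Suc)
qed simp

lemma merges_Cons:
  "rest \<noteq> [] \<Longrightarrow> merges (a # rest) =
     map (\<lambda>l. a # l) (merges rest) @ map (\<lambda>l. (a + hd l) # tl l) (merges rest)"
  by (cases rest) auto

lemma hockey0:
  "c \<le> M \<Longrightarrow> (\<Sum>a=1..c. ((M - a) choose u)) + ((M - c) choose (Suc u)) = (M choose (Suc u))"
proof (induction c)
  case 0 then show ?case by simp
next
  case (Suc c)
  have "M - c = Suc (M - Suc c)" using Suc.prems by auto
  then have "((M - c) choose (Suc u)) = ((M - Suc c) choose (Suc u)) + ((M - Suc c) choose u)"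
    by simp
  then show ?case using Suc by simp
qed

lemma hockey:
  assumes "1 \<le> b" "b \<le> M + 1"
  shows "(\<Sum>a=1..b-1. ((M - a) choose u)) + ((M + 1 - b) choose (Suc u)) = (M choose (Suc u))"
proof -
  obtain c where "b = Suc c" using assms by (cases b) auto
  then show ?thesis using hockey0[of c M u] assms by simp
qed

lemma tri_swap:
  fixes k :: nat shows "(\<Sum>a=1..k. \<Sum>b=a+1..k. h a b) = (\<Sum>b=1..k. \<Sum>a=1..b-1. h a b :: 'a :: comm_monoid_add)"
proof (induction k)
  case 0 then show ?case by simp
next
  case (Suc k)
  have "(\<Sum>a=1..Suc k. \<Sum>b=a+1..Suc k. h a b) = (\<Sum>a=1..k. \<Sum>b=a+1..Suc k. h a b)"
    by simp
  also have "\<dots> = (\<Sum>a=1..k. (\<Sum>b=a+1..k. h a b) + h a (Suc k))"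
    by (intro sum.cong refl) simp
  also have "\<dots> = (\<Sum>a=1..k. \<Sum>b=a+1..k. h a b) + (\<Sum>a=1..k. h a (Suc k))"
    by (simp add: sum.distrib)
  also have "\<dots> = (\<Sum>b=1..Suc k. \<Sum>a=1..b-1. h a b)"
    using Suc by simp
  finally show ?case .
qed

lemma coef_identity:
  assumes "b \<in> {1..k}" "s \<le> Suc n2" "s \<le> k - b" "s = 0 \<longrightarrow> b = k"
  shows "(if s \<ge> 1 then ((k - b - s) choose (Suc n2 - s)) else 0)
       + (if s \<le> n2 then (\<Sum>a=1..b-1. ((k - a - Suc s) choose (n2 - s))) else 0)
       = ((k - Suc s) choose (Suc n2 - s))"
proof -
  consider "s = Suc n2" | "s \<ge> 1" "s \<le> n2" | "s = 0" using assms by linarith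
  then show ?thesis
  proof cases
    case 1 then show ?thesis by simp
  next
    case 2
    have h: "(\<Sum>a=1..b-1. ((k - Suc s - a) choose (n2 - s))) + ((k - Suc s + 1 - b) choose (Suc (n2 - s)))
          = ((k - Suc s) choose (Suc (n2 - s)))"
      using assms 2 by (intro hockey) auto
    have e1: "k - Suc s + 1 - b = k - b - s" using assms 2 by auto
    have e2: "Suc (n2 - s) = Suc n2 - s" using 2 by auto
    have e3: "(\<Sum>a=1..b-1. ((k - Suc s - a) choose (n2 - s))) = (\<Sum>a=1..b-1. ((k - a - Suc s) choose (n2 - s)))"
      by (intro sum.cong refl) (simp add: algebra_simps)
    show ?thesis using h 2 unfolding e1 e2 e3 by (simp add: add.commute)
  next
    case 3
    with assms have bk: "b = k" "k \<ge> 1" by auto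
    have h: "(\<Sum>a=1..b-1. ((k - 1 - a) choose n2)) + ((k - 1 + 1 - b) choose (Suc n2)) = ((k - 1) choose (Suc n2))"
      using bk by (intro hockey) auto
    have e3: "(\<Sum>a=1..b-1. ((k - 1 - a) choose n2)) = (\<Sum>a=1..b-1. ((k - a - 1) choose n2))"
      by (intro sum.cong refl) (simp add: algebra_simps)
    show ?thesis using h 3 bk unfolding e3 by simp
  qed
qed

lemma merges_sum:
  fixes \<psi> :: "nat list \<Rightarrow> 'a :: comm_ring_1"
  assumes "n \<ge> 1"
  shows "(\<Sum>ks\<in>comp k n. sum_list (map \<psi> (merges ks)))
       = (\<Sum>r=1..n. of_nat ((k - r) choose (n - r)) * (\<Sum>p\<in>comp k r. \<psi> p))"
proof -
  obtain n1 where n: "n = Suc n1" using assms by (cases n) auto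
  have "(\<Sum>ks\<in>comp k (Suc n1). sum_list (map \<psi> (merges ks)))
       = (\<Sum>r=1..Suc n1. of_nat ((k - r) choose (Suc n1 - r)) * (\<Sum>p\<in>comp k r. \<psi> p))"
  proof (induction n1 arbitrary: k \<psi>)
    case 0
    show ?case
      by (simp add: sum_comp_Suc comp_0 cong: if_cong) (intro sum.cong refl, auto split: if_splits)
  next
    case (Suc n2)
    define W where "W b s = (\<Sum>q\<in>comp (k - b) s. \<psi> (b # q))" for b s
    define \<psi>' where "\<psi>' a q = \<psi> (a # q) + \<psi> ((a + hd q) # tl q)" for a q
    have "(\<Sum>ks\<in>comp k (Suc (Suc n2)). sum_list (map \<psi> (merges ks)))
        = (\<Sum>a=1..k. \<Sum>q\<in>comp (k - a) (Suc n2). sum_list (map \<psi> (merges (a # q))))"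
      by (rule sum_comp_Suc)
    also have "\<dots> = (\<Sum>a=1..k. \<Sum>q\<in>comp (k - a) (Suc n2). sum_list (map (\<psi>' a) (merges q)))"
    proof (intro sum.cong refl)
      fix a q assume "q \<in> comp (k - a) (Suc n2)"
      then have "q \<noteq> []" by (auto simp: comp_def)
      then show "sum_list (map \<psi> (merges (a # q))) = sum_list (map (\<psi>' a) (merges q))"
        by (simp add: merges_Cons \<psi>'_def[abs_def] sum_list_addf[symmetric] o_def)
    qed
    also have "\<dots> = (\<Sum>a=1..k. \<Sum>r=1..Suc n2. of_nat ((k - a - r) choose (Suc n2 - r)) * (\<Sum>q\<in>comp (k - a) r. \<psi>' a q))"
      by (intro sum.cong refl Suc.IH)
    also have "\<dots> = (\<Sum>a=1..k. \<Sum>s=0..n2. of_nat ((k - a - Suc s) choose (n2 - s)) * (W a (Suc s) + (\<Sum>b=a+1..k. W b s)))"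
    proof (rule sum.cong[OF refl])
      fix a assume a: "a \<in> {1..k}"
      have "(\<Sum>r=1..Suc n2. of_nat ((k - a - r) choose (Suc n2 - r)) * (\<Sum>q\<in>comp (k - a) r. \<psi>' a q))
          = (\<Sum>s=0..n2. of_nat ((k - a - Suc s) choose (Suc n2 - Suc s)) * (\<Sum>q\<in>comp (k - a) (Suc s). \<psi>' a q))"
        by (simp only: One_nat_def sum.atLeast_Suc_atMost_Suc_shift o_def diff_Suc_Suc)
      also have "\<dots> = (\<Sum>s=0..n2. of_nat ((k - a - Suc s) choose (n2 - s)) * (W a (Suc s) + (\<Sum>b=a+1..k. W b s)))"
      proof (intro sum.cong refl arg_cong2[where f="(*)"])
        fix s
        show "of_nat ((k - a - Suc s) choose (Suc n2 - Suc s)) = (of_nat ((k - a - Suc s) choose (n2 - s)) :: 'a)"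
          by simp
        have "(\<Sum>q\<in>comp (k - a) (Suc s). \<psi>' a q)
            = W a (Suc s) + (\<Sum>q\<in>comp (k - a) (Suc s). \<psi> ((a + hd q) # tl q))"
          by (simp add: \<psi>'_def W_def sum.distrib)
        also have "(\<Sum>q\<in>comp (k - a) (Suc s). \<psi> ((a + hd q) # tl q))
            = (\<Sum>c=1..k-a. \<Sum>q\<in>comp (k - a - c) s. \<psi> ((a + c) # q))"
          by (subst sum_comp_Suc) simp
        also have "\<dots> = (\<Sum>c=1..k-a. W (a + c) s)"
          by (intro sum.cong refl) (simp add: W_def diff_diff_left)
        also have "\<dots> = (\<Sum>b=a+1..k. W b s)"
        proof -
          have "(\<Sum>c=1..k-a. W (a + c) s) = (\<Sum>b=1+a..k-a+a. W b s)"
            using sum.shift_bounds_cl_nat_ivl[of "\<lambda>b. W b s" 1 a "k - a"] by (simp add: add.commute)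
          also have "k - a + a = k" using a by simp
          finally show ?thesis by (simp add: add.commute)
        qed
        finally show "(\<Sum>q\<in>comp (k - a) (Suc s). \<psi>' a q) = W a (Suc s) + (\<Sum>b=a+1..k. W b s)" .
      qed
      finally show "(\<Sum>r=1..Suc n2. of_nat ((k - a - r) choose (Suc n2 - r)) * (\<Sum>q\<in>comp (k - a) r. \<psi>' a q))
          = (\<Sum>s=0..n2. of_nat ((k - a - Suc s) choose (n2 - s)) * (W a (Suc s) + (\<Sum>b=a+1..k. W b s)))"
        by simp
    qed
    also have "\<dots> = (\<Sum>b=1..k. \<Sum>s=0..Suc n2.
        of_nat ((if s \<ge> 1 then ((k - b - s) choose (Suc n2 - s)) else 0)
       + (if s \<le> n2 then (\<Sum>a=1..b-1. ((k - a - Suc s) choose (n2 - s))) else 0)) * W b s)"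
      (is "?L = ?R")
    proof -
      have "?L = (\<Sum>a=1..k. \<Sum>s=0..n2. of_nat ((k - a - Suc s) choose (n2 - s)) * W a (Suc s))
               + (\<Sum>a=1..k. \<Sum>s=0..n2. \<Sum>b=a+1..k. of_nat ((k - a - Suc s) choose (n2 - s)) * W b s)"
        by (simp add: distrib_left sum.distrib sum_distrib_left)
      also have "(\<Sum>a=1..k. \<Sum>s=0..n2. of_nat ((k - a - Suc s) choose (n2 - s)) * W a (Suc s))
          = (\<Sum>b=1..k. \<Sum>s=0..Suc n2. of_nat (if s \<ge> 1 then ((k - b - s) choose (Suc n2 - s)) else 0) * W b s)"
      proof (rule sum.cong[OF refl])
        fix b
        have "(\<Sum>s=0..Suc n2. of_nat (if s \<ge> 1 then ((k - b - s) choose (Suc n2 - s)) else 0) * W b s)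
            = (\<Sum>s=Suc 0..Suc n2. of_nat (if s \<ge> 1 then ((k - b - s) choose (Suc n2 - s)) else 0) * W b s)"
          by (subst sum.atLeast_Suc_atMost) auto
        also have "\<dots> = (\<Sum>s=0..n2. of_nat ((k - b - Suc s) choose (n2 - s)) * W b (Suc s))"
          by (subst sum.atLeast_Suc_atMost_Suc_shift) (simp add: diff_diff_left)
        finally show "(\<Sum>s=0..n2. of_nat ((k - b - Suc s) choose (n2 - s)) * W b (Suc s))
            = (\<Sum>s=0..Suc n2. of_nat (if s \<ge> 1 then ((k - b - s) choose (Suc n2 - s)) else 0) * W b s)"
          by simp
      qed
      also have "(\<Sum>a=1..k. \<Sum>s=0..n2. \<Sum>b=a+1..k. of_nat ((k - a - Suc s) choose (n2 - s)) * W b s)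
          = (\<Sum>s=0..n2. \<Sum>a=1..k. \<Sum>b=a+1..k. of_nat ((k - a - Suc s) choose (n2 - s)) * W b s)"
        by (rule sum.swap)
      also have "\<dots> = (\<Sum>s=0..n2. \<Sum>b=1..k. \<Sum>a=1..b-1. of_nat ((k - a - Suc s) choose (n2 - s)) * W b s)"
        by (intro sum.cong refl tri_swap)
      also have "\<dots> = (\<Sum>b=1..k. \<Sum>s=0..n2. of_nat (\<Sum>a=1..b-1. ((k - a - Suc s) choose (n2 - s))) * W b s)"
        by (subst sum.swap) (simp add: sum_distrib_right)
      also have "\<dots> = (\<Sum>b=1..k. \<Sum>s=0..Suc n2. of_nat (if s \<le> n2 then (\<Sum>a=1..b-1. ((k - a - Suc s) choose (n2 - s))) else 0) * W b s)"
      proof (rule sum.cong[OF refl])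
        fix b
        have "(\<Sum>s=0..Suc n2. of_nat (if s \<le> n2 then (\<Sum>a=1..b-1. ((k - a - Suc s) choose (n2 - s))) else 0) * W b s)
          = (\<Sum>s=0..n2. of_nat (if s \<le> n2 then (\<Sum>a=1..b-1. ((k - a - Suc s) choose (n2 - s))) else 0) * W b s)"
          by (simp add: sum.atLeast0_atMost_Suc)
        also have "\<dots> = (\<Sum>s=0..n2. of_nat (\<Sum>a=1..b-1. ((k - a - Suc s) choose (n2 - s))) * W b s)"
          by (rule sum.cong) auto
        finally show "(\<Sum>s=0..n2. of_nat (\<Sum>a=1..b-1. ((k - a - Suc s) choose (n2 - s))) * W b s)
          = (\<Sum>s=0..Suc n2. of_nat (if s \<le> n2 then (\<Sum>a=1..b-1. ((k - a - Suc s) choose (n2 - s))) else 0) * W b s)" by simp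
      qed
      finally show ?thesis
        by (simp only: of_nat_add distrib_right sum.distrib)
    qed
    also have "\<dots> = (\<Sum>b=1..k. \<Sum>s=0..Suc n2. of_nat ((k - Suc s) choose (Suc n2 - s)) * W b s)"
    proof (intro sum.cong refl)
      fix b s assume b: "b \<in> {1..k}" and s: "s \<in> {0..Suc n2}"
      show "of_nat ((if s \<ge> 1 then ((k - b - s) choose (Suc n2 - s)) else 0)
          + (if s \<le> n2 then (\<Sum>a=1..b-1. ((k - a - Suc s) choose (n2 - s))) else 0)) * W b s
          = of_nat ((k - Suc s) choose (Suc n2 - s)) * W b s"
      proof (cases "s \<le> k - b \<and> (s = 0 \<longrightarrow> b = k)")
        case True
        then show ?thesis using coef_identity[of b k s n2] b s by simp
      next
        case False
        then have "comp (k - b) s = {}"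
        proof (cases "s \<le> k - b")
          case True
          with False have "s = 0" "b \<noteq> k" by auto
          then show ?thesis using b by (simp add: comp_0)
        next
          case False
          then show ?thesis by (intro comp_empty) simp
        qed
        then show ?thesis by (simp add: W_def)
      qed
    qed
    also have "\<dots> = (\<Sum>s=0..Suc n2. of_nat ((k - Suc s) choose (Suc n2 - s)) * (\<Sum>b=1..k. W b s))"
      by (subst sum.swap) (simp add: sum_distrib_left)
    also have "\<dots> = (\<Sum>r=1..Suc (Suc n2). of_nat ((k - r) choose (Suc (Suc n2) - r)) * (\<Sum>p\<in>comp k r. \<psi> p))"
      by (simp only: One_nat_def sum.atLeast_Suc_atMost_Suc_shift o_def W_def sum_comp_Suc diff_Suc_Suc)
    finally show ?case .
  qed
  then show ?thesis using n by simp
qed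


definition SN :: "nat \<Rightarrow> nat \<Rightarrow> nat \<Rightarrow> nat \<Rightarrow> real" where
  "SN e N k r = (\<Sum>a\<in>comp k r. Zt N (map (\<lambda>x. e * x) a))"

definition FN :: "nat \<Rightarrow> nat \<Rightarrow> complex fps" where
  "FN e N = (\<Prod>j=1..N. 1 - fps_const (complex_of_real (1 / real j ^ e)) * fps_X)"

definition UU :: "nat \<Rightarrow> nat \<Rightarrow> nat \<Rightarrow> complex fps" where
  "UU e N r = Abs_fps (\<lambda>k. complex_of_real (SN e N k r))"

definition VV :: "nat \<Rightarrow> nat \<Rightarrow> nat \<Rightarrow> complex fps" where
  "VV e N r = Abs_fps (\<lambda>l. (-1) ^ r * of_nat (l choose r) * FN e N $ l)"

lemma SN_0_r: "SN e N k 0 = (if k = 0 then 1 else 0)"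
  by (simp add: SN_def comp_0)

lemma SN_N0: "SN e 0 k (Suc r) = 0"
  by (simp add: SN_def sum_comp_Suc)

lemma SN_Suc:
  "SN e (Suc N) k (Suc r) = SN e N k (Suc r) + (\<Sum>a=1..k. (1 / real (Suc N) ^ e) ^ a * SN e N (k - a) r)"
proof -
  have "SN e (Suc N) k (Suc r) = (\<Sum>a=1..k. \<Sum>q\<in>comp (k - a) r. Zt (Suc N) (e * a # map (\<lambda>x. e * x) q))"
    by (simp add: SN_def sum_comp_Suc)
  also have "\<dots> = (\<Sum>a=1..k. \<Sum>q\<in>comp (k - a) r. Zt N (e * a # map (\<lambda>x. e * x) q)
                   + (1 / real (Suc N) ^ e) ^ a * Zt N (map (\<lambda>x. e * x) q))"
    by (intro sum.cong refl, subst Zt_Suc) (simp add: power_mult power_divide)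
  also have "\<dots> = SN e N k (Suc r) + (\<Sum>a=1..k. (1 / real (Suc N) ^ e) ^ a * SN e N (k - a) r)"
    by (simp add: SN_def sum_comp_Suc sum.distrib sum_distrib_left)
  finally show ?thesis .
qed

lemma FN_Suc: "FN e (Suc N) = FN e N * (1 - fps_const (complex_of_real (1 / real (Suc N) ^ e)) * fps_X)"
  by (simp add: FN_def)

lemma one_minus_cX_mult_nth:
  fixes c :: complex
  shows  "((1 - fps_const c * fps_X) * A) $ l = A $ l - (if l = 0 then 0 else c * A $ (l - 1))"
proof -
  have "(1 - fps_const c * fps_X) * A = A - fps_const c * (fps_X * A)" by (simp add: algebra_simps)
  then show ?thesis by (simp add: fps_X_mult_nth)
qed

lemma FN_Suc_nth:
  "FN e (Suc N) $ l = FN e N $ l - (if l = 0 then 0 else complex_of_real (1 / real (Suc N) ^ e) * FN e N $ (l - 1))"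
  by (simp add: FN_Suc mult.commute[of "FN e N"] one_minus_cX_mult_nth)

lemma FN_0 [simp]: "FN e 0 = 1" by (simp add: FN_def)

lemma FN_nth: "FN e N $ l = (-1) ^ l * complex_of_real (Zt N (replicate l e))"
proof (induction N arbitrary: l)
  case 0 then show ?case by (cases l) auto
next
  case (Suc N)
  show ?case
  proof (cases l)
    case 0 then show ?thesis by (simp add: FN_Suc_nth Suc)
  next
    case (Suc l')
    show ?thesis
      by (simp add: FN_Suc_nth Suc.IH Suc Zt_Suc algebra_simps)
  qed
qed

lemma FN_nth_0 [simp]: "FN e N $ 0 = 1" by (simp add: FN_nth)

lemma UU_0: "UU e N 0 = 1"
  by (simp add: UU_def SN_0_r fps_eq_iff)

lemma useries:
  fixes c :: complex
  shows "(1 - fps_const c * fps_X) * Abs_fps (\<lambda>a. if a = 0 then 0 else c ^ a) = fps_const c * fps_X"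
proof (rule fps_ext)
  fix l
  show "((1 - fps_const c * fps_X) * Abs_fps (\<lambda>a. if a = 0 then 0 else c ^ a)) $ l = (fps_const c * fps_X) $ l"
    by (cases l) (auto simp: one_minus_cX_mult_nth power_Suc[symmetric] simp del: power_Suc)
qed

lemma UU_Suc:
  "UU e (Suc N) (Suc r) = UU e N (Suc r)
     + Abs_fps (\<lambda>a. if a = 0 then 0 else complex_of_real (1 / real (Suc N) ^ e) ^ a) * UU e N r"
proof (rule fps_ext)
  fix k
  define x where "x = 1 / real (Suc N) ^ e"
  define c where "c = complex_of_real x"
  have "(Abs_fps (\<lambda>a. if a = 0 then 0 else c ^ a) * UU e N r) $ k
      = (\<Sum>i=0..k. (if i = 0 then 0 else c ^ i) * complex_of_real (SN e N (k - i) r))"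
    by (simp add: fps_mult_nth UU_def)
  also have "\<dots> = (\<Sum>i=1..k. c ^ i * complex_of_real (SN e N (k - i) r))"
    by (simp add: sum.atLeast_Suc_atMost[of 0 k] atLeastSucAtMost_greaterThanAtMost)
  also have "\<dots> = complex_of_real (\<Sum>a=1..k. x ^ a * SN e N (k - a) r)"
    by (simp add: c_def)
  finally have *: "(Abs_fps (\<lambda>a. if a = 0 then 0 else c ^ a) * UU e N r) $ k
      = complex_of_real (\<Sum>a=1..k. x ^ a * SN e N (k - a) r)" .
  have "UU e (Suc N) (Suc r) $ k = complex_of_real (SN e N k (Suc r)) + complex_of_real (\<Sum>a=1..k. x ^ a * SN e N (k - a) r)"
    by (simp add: UU_def SN_Suc x_def)
  also have "\<dots> = (UU e N (Suc r) + Abs_fps (\<lambda>a. if a = 0 then 0 else c ^ a) * UU e N r) $ k"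
    using * by (simp add: UU_def)
  finally show "UU e (Suc N) (Suc r) $ k = (UU e N (Suc r)
     + Abs_fps (\<lambda>a. if a = 0 then 0 else complex_of_real (1 / real (Suc N) ^ e) ^ a) * UU e N r) $ k"
    by (simp only: c_def x_def)
qed

lemma FN_UU: "FN e N * UU e N r = VV e N r"
proof (induction N arbitrary: r)
  case 0
  show ?case
    by (cases r) (auto simp: fps_eq_iff UU_def VV_def SN_0_r SN_N0)
next
  case (Suc N)
  define c where "c = complex_of_real (1 / real (Suc N) ^ e)"
  define u where "u = Abs_fps (\<lambda>a. if a = 0 then 0 else c ^ a)"
  show ?case
  proof (cases r)
    case 0
    then show ?thesis by (simp add: UU_0 VV_def fps_eq_iff)
  next
    case (Suc r')
    have "FN e (Suc N) * UU e (Suc N) r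
        = (1 - fps_const c * fps_X) * (FN e N * UU e N (Suc r'))
          + ((1 - fps_const c * fps_X) * u) * (FN e N * UU e N r')"
    proof -
      have U: "UU e (Suc N) r = UU e N (Suc r') + u * UU e N r'"
        unfolding Suc u_def c_def by (rule UU_Suc)
      have F: "FN e (Suc N) = FN e N * (1 - fps_const c * fps_X)"
        unfolding c_def by (rule FN_Suc)
      show ?thesis unfolding U F by (simp add: algebra_simps)
    qed
    also have "\<dots> = (1 - fps_const c * fps_X) * VV e N (Suc r') + fps_const c * fps_X * VV e N r'"
      by (simp add: Suc.IH u_def useries)
    also have "\<dots> = VV e (Suc N) r"
    proof (rule fps_ext)
      fix l
      show "((1 - fps_const c * fps_X) * VV e N (Suc r') + fps_const c * fps_X * VV e N r') $ l
          = VV e (Suc N) r $ l"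
      proof (cases l)
        case 0 then show ?thesis by (simp add: Suc one_minus_cX_mult_nth VV_def FN_Suc_nth)
      next
        case (Suc l')
        have "fps_const c * fps_X * VV e N r' = fps_const c * (fps_X * VV e N r')" by (simp add: mult.assoc)
        then show ?thesis
          by (simp add: \<open>r = Suc r'\<close> Suc one_minus_cX_mult_nth VV_def FN_Suc_nth c_def fps_X_mult_nth
                algebra_simps add_divide_distrib)
      qed
    qed
    finally show ?thesis .
  qed
qed

lemma SN_formula:
  "complex_of_real (SN e N k r)
     = (\<Sum>j=0..k. fps_nth (inverse (FN e N)) j * ((-1) ^ r * of_nat ((k - j) choose r) * FN e N $ (k - j)))"
proof -
  have "UU e N r = inverse (FN e N) * VV e N r"
  proof -
    have "inverse (FN e N) * FN e N = 1" by (simp add: inverse_mult_eq_1)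
    then have "inverse (FN e N) * VV e N r = (inverse (FN e N) * FN e N) * UU e N r"
      by (simp add: FN_UU[symmetric] mult.assoc)
    then show ?thesis using \<open>inverse (FN e N) * FN e N = 1\<close> by simp
  qed
  then have "UU e N r $ k = (inverse (FN e N) * VV e N r) $ k" by simp
  then show ?thesis by (simp add: UU_def fps_mult_nth VV_def)
qed


declare Zt.simps(2)[simp del]

lemma Zt_rep_zero: "N < l \<Longrightarrow> Zt N (replicate l e) = 0"
proof (induction N arbitrary: l)
  case 0 then show ?case by (cases l) auto
next
  case (Suc N)
  then obtain l' where "l = Suc l'" by (cases l) auto
  with Suc show ?case using Suc.IH[of "Suc l'"] Suc.IH[of l'] by (simp add: Zt_Suc)
qed

lemma prod_expand:
  fixes w :: complex
  shows "(\<Prod>j=1..N. 1 - w / of_nat j ^ e) = (\<Sum>l=0..N. (-1) ^ l * complex_of_real (Zt N (replicate l e)) * w ^ l)"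
proof (induction N)
  case 0 then show ?case by simp
next
  case (Suc N)
  define x where "x = complex_of_real (1 / real (Suc N) ^ e)"
  have x': "w / of_nat (Suc N) ^ e = x * w" by (simp add: x_def field_simps)
  have A: "(\<Sum>l=0..Suc N. (-1) ^ l * complex_of_real (Zt (Suc N) (replicate l e)) * w ^ l)
      = (\<Sum>l=0..Suc N. (-1) ^ l * complex_of_real (Zt N (replicate l e)) * w ^ l)
        + (\<Sum>l=0..Suc N. (if l = 0 then 0 else (-1) ^ l * x * complex_of_real (Zt N (replicate (l - 1) e)) * w ^ l))"
    by (subst sum.distrib[symmetric], intro sum.cong refl)
       (auto simp: x_def Zt_Suc algebra_simps gr0_conv_Suc)
  have B: "(\<Sum>l=0..Suc N. (-1) ^ l * complex_of_real (Zt N (replicate l e)) * w ^ l)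
      = (\<Sum>l=0..N. (-1) ^ l * complex_of_real (Zt N (replicate l e)) * w ^ l)"
    using Zt_rep_zero[of N "Suc N" e] by simp
  have C: "(\<Sum>l=0..Suc N. (if l = 0 then 0 else (-1) ^ l * x * complex_of_real (Zt N (replicate (l - 1) e)) * w ^ l))
      = (\<Sum>l=0..N. (-1) ^ Suc l * x * complex_of_real (Zt N (replicate l e)) * w ^ Suc l)"
    by (subst sum.atLeast0_atMost_Suc_shift) simp
  have D: "(\<Sum>l=0..N. (-1) ^ Suc l * x * complex_of_real (Zt N (replicate l e)) * w ^ Suc l)
      = - (x * w) * (\<Sum>l=0..N. (-1) ^ l * complex_of_real (Zt N (replicate l e)) * w ^ l)"
    by (simp add: sum_distrib_left algebra_simps)
  have "(\<Prod>j=1..Suc N. 1 - w / of_nat j ^ e) = (\<Prod>j=1..N. 1 - w / of_nat j ^ e) * (1 - w / of_nat (Suc N) ^ e)"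
    by (simp add: prod.nat_ivl_Suc' mult.commute del: of_nat_Suc)
  also have "\<dots> = (\<Prod>j=1..N. 1 - w / of_nat j ^ e) * (1 - x * w)"
    by (simp only: x')
  also have "\<dots> = (\<Sum>l=0..Suc N. (-1) ^ l * complex_of_real (Zt (Suc N) (replicate l e)) * w ^ l)"
    unfolding A B C D Suc.IH by (simp add: algebra_simps)
  finally show ?case .
qed

lemma mzv_Nil: "mzv [] = 1"
proof -
  have "{ms :: nat list. length ms = length ([] :: nat list) \<and> sorted_wrt (>) ms \<and> (\<forall>x\<in>set ms. x > 0)} = {[]}"
    by auto
  then show ?thesis unfolding mzv_def by simp
qed

definition e2 :: "nat \<Rightarrow> real" where "e2 l = mzv (replicate l 2)"

lemma e2_limit: "(\<lambda>N. Zt N (replicate l 2)) \<longlonglongrightarrow> e2 l"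
  unfolding e2_def by (rule mzv_limit) simp

lemma e2_bound: "0 \<le> e2 l \<and> e2 l \<le> 2 ^ l"
proof -
  have "e2 l \<le> 2 ^ l"
    using e2_limit[of l] by (rule LIMSEQ_le_const2) (use Zt_bound[of "replicate l 2"] in auto)
  moreover have "0 \<le> e2 l"
    using e2_limit[of l] by (rule LIMSEQ_le_const) (simp add: Zt_nonneg)
  ultimately show ?thesis by simp
qed

lemma e2_series:
  fixes z :: complex
  assumes z: "norm z < 1/2" and z0: "z \<noteq> 0"
  shows "(\<lambda>l. (-1) ^ l * complex_of_real (e2 l) * z ^ (2 * l)) sums (sin (of_real pi * z) / (of_real pi * z))"
proof -
  define a where "a l N = (-1) ^ l * complex_of_real (Zt N (replicate l 2)) * z ^ (2 * l)" for l N
  define b where "b l = (-1) ^ l * complex_of_real (e2 l) * z ^ (2 * l)" for l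
  define M where "M l = (2 * norm z ^ 2) ^ l" for l
  have nz2: "2 * norm z ^ 2 < 1"
  proof -
    have "norm z ^ 2 < (1/2) ^ 2" using z by (intro power_strict_mono) auto
    then have "norm z ^ 2 < 1/4" by (simp add: power_divide)
    then show ?thesis by linarith
  qed
  have lim: "(\<lambda>N. a l N) \<longlonglongrightarrow> b l" for l
    unfolding a_def b_def by (intro tendsto_intros tendsto_of_real e2_limit)
  have bound: "norm (a l N) \<le> M l" for l N
  proof -
    have "norm (a l N) = Zt N (replicate l 2) * norm z ^ (2 * l)"
      by (simp add: a_def norm_mult norm_power Zt_nonneg)
    also have "\<dots> \<le> 2 ^ l * norm z ^ (2 * l)"
      using Zt_bound[of "replicate l 2" N] by (intro mult_right_mono) auto
    also have "\<dots> = M l" by (simp add: M_def power_mult power_mult_distrib)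
    finally show ?thesis .
  qed
  have summM: "summable M" unfolding M_def using nz2
    by (intro summable_geometric) simp
  have ev: "eventually (\<lambda>(k,n). norm (a k n) \<le> M k) (at_top \<times>\<^sub>F sequentially)"
    by (intro always_eventually) (auto simp: bound)
  have tan: "(\<lambda>N. suminf (\<lambda>l. a l N)) \<longlonglongrightarrow> suminf b"
    using tannerys_theorem[OF lim ev summM] by auto
  have summb: "summable (\<lambda>n. norm (b n))"
    using tannerys_theorem[OF lim ev summM] by auto
  have fin: "suminf (\<lambda>l. a l N) = (\<Prod>j=1..N. 1 - z^2 / of_nat j ^ 2)" for N
  proof -
    have "suminf (\<lambda>l. a l N) = (\<Sum>l\<in>{0..N}. a l N)"
      by (rule suminf_finite) (auto simp: a_def Zt_rep_zero)
    also have "\<dots> = (\<Prod>j=1..N. 1 - z^2 / of_nat j ^ 2)"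
      by (subst prod_expand) (simp add: a_def power_mult)
    finally show ?thesis .
  qed
  have "suminf b = sin (of_real pi * z) / (of_real pi * z)"
  proof -
    note False = z0
    have "(\<lambda>N. of_real pi * z * (\<Prod>j=1..N. 1 - z^2 / of_nat j ^ 2)) \<longlonglongrightarrow> sin (of_real pi * z)"
      by (rule sin_product_formula_complex)
    then have "(\<lambda>N. (of_real pi * z * (\<Prod>j=1..N. 1 - z^2 / of_nat j ^ 2)) / (of_real pi * z))
        \<longlonglongrightarrow> sin (of_real pi * z) / (of_real pi * z)"
      by (intro tendsto_divide tendsto_const) (use False in auto)
    moreover have "(\<lambda>N. (of_real pi * z * (\<Prod>j=1..N. 1 - z^2 / of_nat j ^ 2)) / (of_real pi * z))
        = (\<lambda>N. suminf (\<lambda>l. a l N))"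
      using False by (simp add: fin)
    ultimately show ?thesis using tan LIMSEQ_unique by metis
  qed
  moreover have "summable b" using summb summable_norm_cancel by blast
  ultimately show "(\<lambda>l. (-1) ^ l * complex_of_real (e2 l) * z ^ (2 * l)) sums (sin (of_real pi * z) / (of_real pi * z))"
    unfolding b_def[symmetric] by (metis summable_sums)
qed


definition SA :: "complex fps" where
  "SA = Abs_fps (\<lambda>n. if odd n then complex_of_real pi * (-1) ^ (n div 2) * complex_of_real (e2 (n div 2)) else 0)"

lemma SA_sums:
  fixes z :: complex
  assumes z: "norm z < 1/2"
  shows "(\<lambda>n. SA $ n * z ^ n) sums sin (of_real pi * z)"
proof (cases "z = 0")
  case True
  have "(\<lambda>n. SA $ n * z ^ n) sums (\<Sum>n\<in>{0}. SA $ n * z ^ n)"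
    by (rule sums_finite) (use True in auto)
  then show ?thesis using True by (simp add: SA_def)
next
  case False
  have "(\<lambda>l. (complex_of_real pi * z) * ((-1) ^ l * complex_of_real (e2 l) * z ^ (2 * l)))
      sums ((complex_of_real pi * z) * (sin (of_real pi * z) / (of_real pi * z)))"
    by (intro sums_mult e2_series z False)
  also have "(complex_of_real pi * z) * (sin (of_real pi * z) / (of_real pi * z)) = sin (of_real pi * z)"
    using False by simp
  also have "(\<lambda>l. (complex_of_real pi * z) * ((-1) ^ l * complex_of_real (e2 l) * z ^ (2 * l)))
      = (\<lambda>l. SA $ (2 * l + 1) * z ^ (2 * l + 1))"
    by (rule ext) (simp add: SA_def algebra_simps)
  finally have *: "(\<lambda>l. SA $ (2 * l + 1) * z ^ (2 * l + 1)) sums sin (of_real pi * z)" .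
  have "(\<lambda>l. (\<lambda>n. SA $ n * z ^ n) ((\<lambda>l. 2 * l + 1) l)) sums sin (of_real pi * z)
      \<longleftrightarrow> (\<lambda>n. SA $ n * z ^ n) sums sin (of_real pi * z)"
  proof (rule sums_mono_reindex)
    show "strict_mono (\<lambda>l::nat. 2 * l + 1)" by (auto simp: strict_mono_def)
    fix n assume "n \<notin> range (\<lambda>l::nat. 2 * l + 1)"
    then have "even n" by (metis oddE rangeI)
    then show "SA $ n * z ^ n = 0" by (simp add: SA_def)
  qed
  with * show ?thesis by simp
qed

lemma SA_eq: "SA = fps_sin (complex_of_real pi)"
proof (rule eval_fps_eqD)
  have "summable (\<lambda>n. SA $ n * (1/4 :: complex) ^ n)"
    using SA_sums[of "1/4"] by (auto simp: sums_iff)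
  then have "conv_radius (fps_nth SA) \<ge> norm (1/4 :: complex)" by (rule conv_radius_geI)
  then show "fps_conv_radius SA > 0"
    unfolding fps_conv_radius_def by (rule less_le_trans[rotated]) simp
  show "fps_conv_radius (fps_sin (complex_of_real pi)) > 0" by simp
  have ev: "eventually (\<lambda>z::complex. z \<in> ball 0 (1/2)) (nhds 0)"
    by (intro eventually_nhds_in_open) auto
  show "eventually (\<lambda>z. eval_fps SA z = eval_fps (fps_sin (complex_of_real pi)) z) (nhds 0)"
    using ev
  proof eventually_elim
    case (elim z)
    then have "norm z < 1/2" by simp
    then have "eval_fps SA z = sin (of_real pi * z)"
      unfolding eval_fps_def using SA_sums sums_unique by metis
    then show ?case by simp
  qed
qed

lemma e2_closed: "e2 l = pi ^ (2 * l) / fact (2 * l + 1)"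
proof -
  have "SA $ (2 * l + 1) = fps_sin (complex_of_real pi) $ (2 * l + 1)" by (simp add: SA_eq)
  then have "complex_of_real pi * (-1) ^ l * complex_of_real (e2 l)
      = (-1) ^ l * complex_of_real pi ^ (2 * l + 1) / of_nat (fact (2 * l + 1))"
    by (simp add: SA_def fps_sin_def)
  then have "(complex_of_real pi * (-1) ^ l) * complex_of_real (e2 l)
      = (complex_of_real pi * (-1) ^ l) * complex_of_real (pi ^ (2 * l) / fact (2 * l + 1))"
    by (simp add: power_add algebra_simps)
  moreover have "complex_of_real pi * (-1) ^ l \<noteq> 0" by simp
  ultimately have "complex_of_real (e2 l) = complex_of_real (pi ^ (2 * l) / fact (2 * l + 1))"
    by (rule mult_left_cancel[THEN iffD1, rotated])
  then show ?thesis by (simp only: of_real_eq_iff)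
qed


definition D1 :: "real fps" where "D1 = Abs_fps (\<lambda>n. 1 / fact (n + 1))"
definition D2 :: "real fps" where "D2 = Abs_fps (\<lambda>n. 2 ^ (n + 1) / fact (n + 1))"
definition BB :: "real fps" where "BB = fps_X / (fps_exp 1 - 1)"
definition B2 :: "real fps" where "B2 = Abs_fps (\<lambda>n. 2 ^ n * BB $ n)"
definition SS :: "real fps" where "SS = Abs_fps (\<lambda>n. if even n then 1 / fact (n + 1) else 0)"
definition TT :: "real fps" where "TT = fps_const 2 * BB - B2"

lemma XD1: "fps_X * D1 = fps_exp 1 - 1"
  by (rule fps_ext) (auto simp: D1_def fps_X_mult_nth gr0_conv_Suc)

lemma XD2: "fps_X * D2 = fps_exp 2 - 1"
  by (rule fps_ext) (auto simp: D2_def fps_X_mult_nth gr0_conv_Suc)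

lemma X_nz: "(fps_X :: real fps) \<noteq> 0" by simp

lemma BB_D1: "BB * D1 = 1"
proof -
  have sd: "subdegree (fps_exp 1 - 1 :: real fps) = 1"
    by (rule subdegreeI) auto
  have nz: "(fps_exp 1 - 1 :: real fps) \<noteq> 0"
  proof
    assume "(fps_exp 1 - 1 :: real fps) = 0"
    then have "(fps_exp 1 - 1 :: real fps) $ 1 = 0" by simp
    then show False by simp
  qed
  have sd2: "subdegree (fps_X :: real fps) \<ge> subdegree (fps_exp 1 - 1 :: real fps)"
    by (simp only: sd) simp
  have "BB * (fps_exp 1 - 1) = fps_X"
    unfolding BB_def by (rule fps_times_divide_eq[OF nz sd2])
  then have "fps_X * (BB * D1) = fps_X * 1"
    by (simp add: XD1[symmetric] algebra_simps)
  then show ?thesis by (rule mult_left_cancel[THEN iffD1, OF X_nz])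
qed

lemma bernoulli_BB: "bernoulli n = fact n * BB $ n"
  by (simp add: bernoulli_def BB_def)

lemma compose2:
  "f oo (fps_const (2::real) * fps_X) = Abs_fps (\<lambda>n. 2 ^ n * f $ n)"
  by (rule fps_compose_linear)

lemma B2_D2: "B2 * D2 = 2"
proof -
  define c where "c = fps_const (2::real) * fps_X"
  have c0: "c $ 0 = 0" by (simp add: c_def)
  have "(BB * D1) oo c = 1" by (simp add: BB_D1)
  have "(BB * D1) oo c = (BB oo c) * (D1 oo c)" by (rule fps_compose_mult_distrib[OF c0])
  have "BB oo c = B2" unfolding c_def by (simp add: compose2 B2_def)
  have D2c: "D2 = fps_const 2 * (D1 oo c)"
    unfolding c_def by (rule fps_ext) (simp add: compose2 D1_def D2_def)
  have "B2 * D2 = fps_const 2 * (B2 * (D1 oo c))" unfolding D2c by (simp only: ac_simps)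
  also have "B2 * (D1 oo c) = 1" using \<open>(BB * D1) oo c = 1\<close> \<open>(BB * D1) oo c = (BB oo c) * (D1 oo c)\<close> \<open>BB oo c = B2\<close> by simp
  finally show ?thesis by (simp add: numeral_fps_const)
qed

lemma exp2: "fps_exp (2::real) = fps_exp 1 * fps_exp 1"
  using fps_exp_add_mult[of "1::real" 1] by simp

lemma exp_inv: "fps_exp (1::real) * fps_exp (-1) = 1"
  using fps_exp_add_mult[of "1::real" "-1"] by simp

lemma D2_D1: "D2 = D1 * (fps_exp 1 + 1)"
proof -
  have "fps_X * D2 = fps_X * (D1 * (fps_exp 1 + 1))"
    by (simp add: XD2 exp2 mult.assoc[symmetric] XD1 algebra_simps)
  then show ?thesis by (rule mult_left_cancel[THEN iffD1, OF X_nz])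
qed

lemma XSS: "fps_const 2 * (fps_X * SS) = fps_exp 1 - fps_exp (-1)"
proof (rule fps_ext)
  fix n
  show "(fps_const 2 * (fps_X * SS)) $ n = (fps_exp 1 - fps_exp (-1)) $ n"
  proof (cases n)
    case 0 then show ?thesis by simp
  next
    case (Suc n')
    then show ?thesis by (auto simp: SS_def algebra_simps)
  qed
qed

lemma SS_TT: "SS * TT = 1"
proof -
  define Y where "Y = fps_const 2 * fps_X * D2"
  have Ynz: "Y \<noteq> 0"
  proof
    assume "Y = 0"
    then have "Y $ 1 = 0" by simp
    then show False by (simp add: Y_def D2_def)
  qed
  have "Y * (SS * TT) = (fps_const 2 * (fps_X * SS)) * (fps_const 2 * (BB * D2) - B2 * D2)"
    by (simp add: Y_def TT_def algebra_simps)
  also have "BB * D2 = fps_exp 1 + 1"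
    by (simp add: D2_D1 mult.assoc[symmetric] BB_D1)
  also have "(fps_const 2 * (fps_X * SS)) * (fps_const 2 * (fps_exp 1 + 1) - B2 * D2) = 2 * (fps_exp 1 * fps_exp 1 - fps_exp 1 * fps_exp (-1))"
    by (simp only: XSS B2_D2) (simp add: algebra_simps numeral_fps_const)
  also have "\<dots> = Y * 1"
    by (simp add: exp_inv exp2[symmetric] Y_def XD2[symmetric] numeral_fps_const algebra_simps)
  finally show ?thesis by (rule mult_left_cancel[THEN iffD1, OF Ynz])
qed

definition Pb :: "real fps" where "Pb = Abs_fps (\<lambda>n. beta2 n / fact (2 * n))"
definition Qs :: "real fps" where "Qs = Abs_fps (\<lambda>n. 1 / fact (2 * n + 1))"

lemma TT_even: "TT $ (2 * n) = beta2 n / fact (2 * n)"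
proof -
  have h: "(2::real) ^ (2 * n) = 4 ^ n" by (simp add: power_mult)
  have "TT $ (2 * n) = (2 - 2 ^ (2 * n)) * BB $ (2 * n)" by (simp add: TT_def B2_def algebra_simps)
  also have "\<dots> = (2 - 4 ^ n) * BB $ (2 * n)" by (simp only: h)
  finally show ?thesis by (simp add: beta2_def bernoulli_BB)
qed

lemma sum_even_reindex:
  fixes f :: "nat \<Rightarrow> real"
  assumes "\<And>a. a \<le> 2 * n \<Longrightarrow> odd a \<Longrightarrow> f a = 0"
  shows "(\<Sum>a=0..2 * n. f a) = (\<Sum>i=0..n. f (2 * i))"
proof -
  have "(\<Sum>a=0..2 * n. f a) = (\<Sum>a\<in>(\<lambda>i. 2 * i) ` {0..n}. f a)"
  proof (rule sum.mono_neutral_right)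
    show "\<forall>i\<in>{0..2 * n} - (\<lambda>i. 2 * i) ` {0..n}. f i = 0"
    proof
      fix i assume i: "i \<in> {0..2 * n} - (\<lambda>i. 2 * i) ` {0..n}"
      have "odd i"
      proof
        assume "even i"
        then have "i = 2 * (i div 2)" by simp
        moreover have "i div 2 \<in> {0..n}" using i by auto
        ultimately show False using i by blast
      qed
      then show "f i = 0" using i assms by auto
    qed
  qed auto
  also have "\<dots> = (\<Sum>i=0..n. f (2 * i))"
    by (subst sum.reindex) (auto simp: inj_on_def)
  finally show ?thesis .
qed

lemma Pb_Qs: "Pb * Qs = 1"
proof (rule fps_ext)
  fix n
  have "(TT * SS) $ (2 * n) = (\<Sum>a=0..2 * n. TT $ a * SS $ (2 * n - a))"
    by (simp add: fps_mult_nth)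
  also have "\<dots> = (\<Sum>i=0..n. TT $ (2 * i) * SS $ (2 * n - 2 * i))"
    by (rule sum_even_reindex) (auto simp: SS_def)
  also have "\<dots> = (Pb * Qs) $ n"
    by (simp add: fps_mult_nth TT_even Pb_def Qs_def SS_def diff_mult_distrib2[symmetric])
  finally have "(Pb * Qs) $ n = (TT * SS) $ (2 * n)" by simp
  also have "\<dots> = (1 :: real fps) $ (2 * n)" by (simp add: SS_TT mult.commute)
  finally show "(Pb * Qs) $ n = (1 :: real fps) $ n" by simp
qed


definition omega :: "nat \<Rightarrow> complex" where "omega m = cis (2 * pi / real m)"

lemma roots_poly_prod:
  assumes m: "m \<ge> 1"
  shows "(\<Prod>k<m. [:- (omega m ^ k), 1:]) = monom 1 m - (1 :: complex poly)"
proof -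
  define P :: "complex poly" where "P = monom 1 m - 1"
  have roots: "{z. poly P z = 0} = {z. z ^ m = 1}" by (auto simp: P_def poly_monom)
  have lc: "lead_coeff P = 1"
  proof -
    have "degree (monom (1::complex) m) = m" by (simp add: degree_monom_eq)
    then have "lead_coeff ((-1) + monom 1 m :: complex poly) = lead_coeff (monom (1::complex) m)"
      using m by (intro lead_coeff_add_le) auto
    moreover have "P = (-1) + monom 1 m" by (simp add: P_def)
    ultimately show ?thesis by (metis lead_coeff_monom)
  qed
  have rsq: "rsquarefree P"
    unfolding rsquarefree_roots
  proof (intro allI notI)
    fix a assume "poly P a = 0 \<and> poly (pderiv P) a = 0"
    then have a1: "a ^ m = 1" and d: "of_nat m * a ^ (m - 1) = 0"
      by (auto simp: P_def pderiv_diff pderiv_monom poly_monom)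
    from a1 m have "a \<noteq> 0" by (cases m) auto
    with d m show False by simp
  qed
  have "smult (lead_coeff P) (\<Prod>z|poly P z = 0. [:-z, 1:]) = P"
    by (rule complex_poly_decompose_rsquarefree[OF rsq])
  then have eq: "(\<Prod>z\<in>{z. z ^ m = 1}. [:-z, 1:]) = P" using lc roots by simp
  have bij: "bij_betw (\<lambda>k. cis (2 * pi * real k / real m)) {..<m} {z. z ^ m = 1}"
    using m Complex.bij_betw_roots_unity[of m] by auto
  have cisk: "cis (2 * pi * real k / real m) = omega m ^ k" for k
    by (simp add: omega_def Complex.DeMoivre mult.commute)
  have "(\<Prod>z\<in>{z. z ^ m = 1}. [:-z, 1:]) = (\<Prod>k<m. [:- (omega m ^ k), 1:])"
    using prod.reindex_bij_betw[OF bij, of "\<lambda>z. [:-z, 1:]"] by (simp add: cisk)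
  with eq show ?thesis by (simp add: P_def)
qed

lemma roots_prod_scalar:
  assumes m: "m \<ge> 1"
  shows "(\<Prod>k<m. 1 - omega m ^ k * x) = 1 - x ^ m"
proof (cases "x = 0")
  case True then show ?thesis using m by (simp add: power_0_left)
next
  case False
  have "(\<Prod>k<m. 1 - omega m ^ k * x) = (\<Prod>k<m. x * (1 / x - omega m ^ k))"
    using False by (intro prod.cong) (auto simp: field_simps)
  also have "\<dots> = x ^ m * (\<Prod>k<m. (1 / x - omega m ^ k))"
    by (simp add: prod.distrib)
  also have "(\<Prod>k<m. (1 / x - omega m ^ k)) = poly (\<Prod>k<m. [:- (omega m ^ k), 1:]) (1 / x)"
    by (simp add: poly_prod)
  also have "\<dots> = (1 / x) ^ m - 1" by (simp add: roots_poly_prod[OF m] poly_monom)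
  also have "x ^ m * ((1 / x) ^ m - 1) = 1 - x ^ m"
    using False by (simp add: field_simps power_one_over)
  finally show ?thesis .
qed

lemma roots_prod_fps:
  assumes m: "m \<ge> 1"
  shows "(\<Prod>k<m. 1 - fps_const (omega m ^ k * d) * fps_X) = 1 - fps_const (d ^ m) * fps_X ^ m"
proof -
  define P1 :: "complex poly" where "P1 = (\<Prod>k<m. [:1, - (omega m ^ k * d):])"
  define P2 :: "complex poly" where "P2 = 1 - monom (d ^ m) m"
  have "poly P1 y = poly P2 y" for y
  proof -
    have "poly P1 y = (\<Prod>k<m. 1 - omega m ^ k * (d * y))"
      by (simp add: P1_def poly_prod algebra_simps)
    also have "\<dots> = 1 - (d * y) ^ m" by (rule roots_prod_scalar[OF m])
    also have "\<dots> = poly P2 y" by (simp add: P2_def poly_monom power_mult_distrib)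
    finally show ?thesis .
  qed
  then have "P1 = P2" using poly_eq_poly_eq_iff by blast
  then have "fps_of_poly P1 = fps_of_poly P2" by simp
  moreover have "fps_of_poly P1 = (\<Prod>k<m. 1 - fps_const (omega m ^ k * d) * fps_X)"
    by (simp add: P1_def fps_of_poly_prod fps_of_poly_pCons fps_of_poly_const algebra_simps
        fps_const_neg[symmetric] del: fps_const_neg)
  moreover have "fps_of_poly P2 = 1 - fps_const (d ^ m) * fps_X ^ m"
    by (simp add: P2_def fps_of_poly_diff fps_of_poly_monom)
  ultimately show ?thesis by simp
qed


definition Lm :: "nat \<Rightarrow> nat \<Rightarrow> nat list set" where
  "Lm m n = {ls. length ls = m \<and> sum_list ls = n}"

lemma Lm_0: "Lm 0 n = (if n = 0 then {[]} else {})"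
  by (auto simp: Lm_def)

lemma Lm_Suc: "Lm (Suc m) n = (\<lambda>(a, ls). a # ls) ` (SIGMA a:{0..n}. Lm m (n - a))"
proof safe
  fix ks assume "ks \<in> Lm (Suc m) n"
  then obtain a q where ks: "ks = a # q" unfolding Lm_def by (cases ks) auto
  with \<open>ks \<in> Lm (Suc m) n\<close> have "a \<in> {0..n}" "q \<in> Lm m (n - a)"
    by (auto simp: Lm_def)
  then show "ks \<in> (\<lambda>(a, q). a # q) ` (SIGMA a:{0..n}. Lm m (n - a))"
    using ks by force
next
  fix a q assume "a \<in> {0..n}" "q \<in> Lm m (n - a)"
  then show "a # q \<in> Lm (Suc m) n" by (auto simp: Lm_def)
qed

lemma finite_Lm: "finite (Lm m n)"
  by (induction m arbitrary: n) (auto simp: Lm_0 Lm_Suc)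

lemma prod_fps_nth:
  fixes A :: "nat \<Rightarrow> 'a :: comm_ring_1 fps"
  shows "(\<Prod>p<m. A p) $ n = (\<Sum>ls\<in>Lm m n. \<Prod>p<m. A p $ (ls ! p))"
proof (induction m arbitrary: A n)
  case 0 then show ?case by (simp add: Lm_0)
next
  case (Suc m)
  have inj: "inj_on (\<lambda>(a, ls). a # ls) (SIGMA a:{0..n}. Lm m (n - a))"
    by (auto simp: inj_on_def)
  have "(\<Prod>p<Suc m. A p) $ n = (A 0 * (\<Prod>p<m. A (Suc p))) $ n"
    by (simp only: prod.lessThan_Suc_shift)
  also have "\<dots> = (\<Sum>a=0..n. A 0 $ a * (\<Sum>ls\<in>Lm m (n - a). \<Prod>p<m. A (Suc p) $ (ls ! p)))"
    by (simp add: fps_mult_nth Suc.IH)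
  also have "\<dots> = (\<Sum>a=0..n. \<Sum>ls\<in>Lm m (n - a). \<Prod>p<Suc m. A p $ ((a # ls) ! p))"
    by (simp add: sum_distrib_left prod.lessThan_Suc_shift del: prod.lessThan_Suc)
  also have "\<dots> = (\<Sum>(a, ls)\<in>(SIGMA a:{0..n}. Lm m (n - a)). \<Prod>p<Suc m. A p $ ((a # ls) ! p))"
    by (subst sum.Sigma) (auto simp: finite_Lm)
  also have "\<dots> = (\<Sum>ls\<in>Lm (Suc m) n. \<Prod>p<Suc m. A p $ (ls ! p))"
    unfolding Lm_Suc by (subst sum.reindex[OF inj]) (simp add: case_prod_unfold)
  finally show ?case .
qed

lemma compXm_nth:
  fixes A :: "'a :: comm_ring_1 fps"
  assumes m: "m \<ge> 1"
  shows "(A oo fps_X ^ m) $ n = (if m dvd n then A $ (n div m) else 0)"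
proof -
  have "(A oo fps_X ^ m) $ n = (\<Sum>i=0..n. A $ i * (if n = m * i then 1 else 0))"
    by (simp add: fps_compose_nth power_mult[symmetric])
  also have "\<dots> = (\<Sum>i\<in>{0..n} \<inter> {i. n = m * i}. A $ i)"
    by (simp add: sum.inter_restrict if_distrib cong: if_cong)
  also have "\<dots> = (if m dvd n then A $ (n div m) else 0)"
  proof (cases "m dvd n")
    case True
    then obtain q where q: "n = m * q" by blast
    have "q \<le> n" using m q by (cases m) auto
    then have "{0..n} \<inter> {i. n = m * i} = {q}" using q m by auto
    then show ?thesis using True q m by simp
  next
    case False
    then have "{0..n} \<inter> {i. n = m * i} = {}" by auto
    then show ?thesis using False by simp
  qed
  finally show ?thesis .
qed

lemma lin_comp_nth: fixes A :: "'a::comm_ring_1 fps" shows "(A oo (fps_const c * fps_X)) $ n = c ^ n * A $ n"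
  by (simp add: fps_compose_linear)

lemma one_minus_comp:
  fixes b :: "complex fps"
  assumes "b $ 0 = 0"
  shows "(1 - fps_const c * fps_X) oo b = 1 - fps_const c * b"
  using assms by (simp add: fps_compose_sub_distrib fps_compose_mult_distrib)

lemma FN_comp:
  assumes m: "m \<ge> 1"
  shows "FN (2 * m) N oo fps_X ^ m = (\<Prod>p<m. FN 2 N oo (fps_const (omega m ^ p) * fps_X))"
proof -
  have X0: "(fps_X ^ m :: complex fps) $ 0 = 0" using m by simp
  have L0: "(fps_const (omega m ^ p) * fps_X :: complex fps) $ 0 = 0" for p by simp
  define d where "d j = complex_of_real (1 / real j ^ 2)" for j :: nat
  have "FN (2 * m) N oo fps_X ^ m = (\<Prod>j=1..N. (1 - fps_const (complex_of_real (1 / real j ^ (2 * m))) * fps_X) oo fps_X ^ m)"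
    unfolding FN_def by (rule fps_compose_prod_distrib[OF X0])
  also have "\<dots> = (\<Prod>j=1..N. 1 - fps_const (d j ^ m) * fps_X ^ m)"
    by (intro prod.cong refl, subst one_minus_comp[OF X0])
       (simp add: d_def power_mult power_divide)
  also have "\<dots> = (\<Prod>j=1..N. \<Prod>p<m. 1 - fps_const (omega m ^ p * d j) * fps_X)"
    by (intro prod.cong refl) (simp add: roots_prod_fps[OF m])
  also have "\<dots> = (\<Prod>p<m. \<Prod>j=1..N. 1 - fps_const (omega m ^ p * d j) * fps_X)"
    by (rule prod.swap)
  also have "\<dots> = (\<Prod>p<m. FN 2 N oo (fps_const (omega m ^ p) * fps_X))"
  proof (intro prod.cong refl)
    fix p
    have "FN 2 N oo (fps_const (omega m ^ p) * fps_X)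
        = (\<Prod>j=1..N. (1 - fps_const (d j) * fps_X) oo (fps_const (omega m ^ p) * fps_X))"
      unfolding FN_def d_def by (rule fps_compose_prod_distrib[OF L0])
    also have "\<dots> = (\<Prod>j=1..N. 1 - fps_const (omega m ^ p * d j) * fps_X)"
      by (intro prod.cong refl, subst one_minus_comp[OF L0]) (simp add: algebra_simps)
    finally show "(\<Prod>j=1..N. 1 - fps_const (omega m ^ p * d j) * fps_X) = FN 2 N oo (fps_const (omega m ^ p) * fps_X)" ..
  qed
  finally show ?thesis .
qed


definition fco :: "nat \<Rightarrow> nat \<Rightarrow> complex" where
  "fco m l = (-1) ^ l * complex_of_real (mzv (replicate l (2 * m)))"
definition Fm :: "nat \<Rightarrow> complex fps" where "Fm m = Abs_fps (fco m)"
definition Ee :: "complex fps" where "Ee = Abs_fps (\<lambda>l. (-1) ^ l * complex_of_real (e2 l))"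
definition Hh :: "complex fps" where
  "Hh = Abs_fps (\<lambda>n. (-1) ^ n * complex_of_real (beta2 n / fact (2 * n)) * complex_of_real pi ^ (2 * n))"

lemma FN_lim:
  assumes m: "m \<ge> 1"
  shows "(\<lambda>N. FN (2 * m) N $ l) \<longlonglongrightarrow> fco m l"
proof -
  have "(\<lambda>N. Zt N (replicate l (2 * m))) \<longlonglongrightarrow> mzv (replicate l (2 * m))"
    using m by (intro mzv_limit) auto
  then show ?thesis unfolding FN_nth fco_def by (intro tendsto_intros tendsto_of_real)
qed

lemma FN2_lim: "(\<lambda>N. FN 2 N $ l) \<longlonglongrightarrow> Ee $ l"
  unfolding FN_nth Ee_def fps_nth_Abs_fps by (intro tendsto_intros tendsto_of_real e2_limit)

lemma prod_lim:
  fixes A :: "nat \<Rightarrow> nat \<Rightarrow> complex fps"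
  assumes "\<And>p l. p < m \<Longrightarrow> (\<lambda>N. A N p $ l) \<longlonglongrightarrow> B p $ l"
  shows "(\<lambda>N. (\<Prod>p<m. A N p) $ n) \<longlonglongrightarrow> (\<Prod>p<m. B p) $ n"
  unfolding prod_fps_nth using assms by (intro tendsto_sum tendsto_prod) auto

lemma Fm_comp:
  assumes m: "m \<ge> 1"
  shows "Fm m oo fps_X ^ m = (\<Prod>p<m. Ee oo (fps_const (omega m ^ p) * fps_X))"
proof (rule fps_ext)
  fix n
  have 1: "(\<lambda>N. (FN (2 * m) N oo fps_X ^ m) $ n) \<longlonglongrightarrow> (Fm m oo fps_X ^ m) $ n"
    unfolding compXm_nth[OF m] by (auto simp: Fm_def intro: FN_lim[OF m])
  have 2: "(\<lambda>N. (\<Prod>p<m. FN 2 N oo (fps_const (omega m ^ p) * fps_X)) $ n)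
      \<longlonglongrightarrow> (\<Prod>p<m. Ee oo (fps_const (omega m ^ p) * fps_X)) $ n"
    by (intro prod_lim) (simp add: lin_comp_nth, intro tendsto_intros FN2_lim)
  show "(Fm m oo fps_X ^ m) $ n = (\<Prod>p<m. Ee oo (fps_const (omega m ^ p) * fps_X)) $ n"
    using 1 2 unfolding FN_comp[OF m] by (rule LIMSEQ_unique)
qed

lemma fco_closed:
  assumes m: "m \<ge> 1"
  shows "fco m l = (\<Sum>ls\<in>Lm m (m * l). \<Prod>p<m. (omega m ^ p) ^ (ls ! p) * Ee $ (ls ! p))"
proof -
  have "fco m l = (Fm m oo fps_X ^ m) $ (m * l)"
    using m by (simp add: compXm_nth Fm_def)
  also have "\<dots> = (\<Sum>ls\<in>Lm m (m * l). \<Prod>p<m. (omega m ^ p) ^ (ls ! p) * Ee $ (ls ! p))"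
    by (simp add: Fm_comp[OF m] prod_fps_nth lin_comp_nth)
  finally show ?thesis .
qed

lemma inv_rec:
  fixes C :: "complex fps"
  assumes C0: "C $ 0 = 1"
  shows "inverse C $ n = (if n = 0 then 1 else - (\<Sum>i=1..n. C $ i * inverse C $ (n - i)))"
proof -
  have "inverse C * C = 1" using C0 by (intro inverse_mult_eq_1) simp
  then have "C * inverse C = 1" by (simp add: mult.commute)
  then have "(C * inverse C) $ n = (1 :: complex fps) $ n" by simp
  then have "(\<Sum>i=0..n. C $ i * inverse C $ (n - i)) = (if n = 0 then 1 else 0)"
    by (simp add: fps_mult_nth)
  moreover have "(\<Sum>i=0..n. C $ i * inverse C $ (n - i)) = inverse C $ n + (\<Sum>i=1..n. C $ i * inverse C $ (n - i))"
    using C0 by (simp add: sum.atLeast_Suc_atMost[of 0 n] atLeastSucAtMost_greaterThanAtMost)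
  ultimately show ?thesis by (auto simp: algebra_simps eq_neg_iff_add_eq_0)
qed

lemma inv_lim:
  fixes A :: "nat \<Rightarrow> complex fps"
  assumes lim: "\<And>l. (\<lambda>N. A N $ l) \<longlonglongrightarrow> B $ l" and A0: "\<And>N. A N $ 0 = 1" and B0: "B $ 0 = 1"
  shows "(\<lambda>N. inverse (A N) $ n) \<longlonglongrightarrow> inverse B $ n"
proof (induction n rule: less_induct)
  case (less n)
  show ?case
  proof (cases "n = 0")
    case True then show ?thesis using A0 B0 by (simp add: inv_rec)
  next
    case False
    have "(\<lambda>N. - (\<Sum>i=1..n. A N $ i * inverse (A N) $ (n - i))) \<longlonglongrightarrow> - (\<Sum>i=1..n. B $ i * inverse B $ (n - i))"
      using False by (intro tendsto_intros lim less) auto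
    then show ?thesis using False by (simp add: inv_rec[OF A0] inv_rec[OF B0])
  qed
qed

lemma Ee_closed: "Ee $ l = (-1) ^ l * complex_of_real pi ^ (2 * l) / of_nat (fact (2 * l + 1))"
  by (simp add: Ee_def e2_closed algebra_simps)

lemma HhP: "Hh $ i = (-1) ^ i * complex_of_real pi ^ (2 * i) * complex_of_real (Pb $ i)"
  by (simp add: Hh_def Pb_def)

lemma EeQ: "Ee $ l = (-1) ^ l * complex_of_real pi ^ (2 * l) * complex_of_real (Qs $ l)"
  by (simp add: Ee_def Qs_def e2_closed)

lemma HE: "Hh * Ee = 1"
proof (rule fps_ext)
  fix n
  have "(Hh * Ee) $ n = (\<Sum>i=0..n. (-1) ^ n * complex_of_real pi ^ (2 * n) * complex_of_real (Pb $ i * Qs $ (n - i)))"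
  proof (unfold fps_mult_nth, intro sum.cong refl)
    fix i assume i: "i \<in> {0..n}"
    have s: "(-1 :: complex) ^ i * (-1) ^ (n - i) = (-1) ^ n"
      using i by (simp add: power_add[symmetric])
    have p: "complex_of_real pi ^ (2 * i) * complex_of_real pi ^ (2 * (n - i)) = complex_of_real pi ^ (2 * n)"
    proof -
      have e: "2 * i + 2 * (n - i) = 2 * n" using i by auto
      show ?thesis by (simp only: power_add[symmetric] e)
    qed
    have "Hh $ i * Ee $ (n - i) = ((-1) ^ i * (-1) ^ (n - i)) * (complex_of_real pi ^ (2 * i) * complex_of_real pi ^ (2 * (n - i)))
        * complex_of_real (Pb $ i * Qs $ (n - i))"
      by (simp add: HhP EeQ mult_ac)
    also have "\<dots> = (-1) ^ n * complex_of_real pi ^ (2 * n) * complex_of_real (Pb $ i * Qs $ (n - i))"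
      by (simp only: s p)
    finally show "Hh $ i * Ee $ (n - i) = (-1) ^ n * complex_of_real pi ^ (2 * n) * complex_of_real (Pb $ i * Qs $ (n - i))" .
  qed
  also have "\<dots> = (-1) ^ n * complex_of_real pi ^ (2 * n) * complex_of_real ((Pb * Qs) $ n)"
    by (simp add: fps_mult_nth sum_distrib_left)
  also have "\<dots> = (1 :: complex fps) $ n" by (simp add: Pb_Qs)
  finally show "(Hh * Ee) $ n = (1 :: complex fps) $ n" .
qed

lemma Fm0: "Fm m $ 0 = 1"
  by (simp add: Fm_def fco_def mzv_Nil)

lemma g_closed:
  assumes m: "m \<ge> 1"
  shows "inverse (Fm m) $ j = (\<Sum>ns\<in>Lm m (m * j). \<Prod>p<m. (omega m ^ p) ^ (ns ! p) * Hh $ (ns ! p))"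
proof -
  define c where "c p = fps_const (omega m ^ p) * fps_X" for p
  have c0: "c p $ 0 = 0" for p by (simp add: c_def)
  have X0: "(fps_X ^ m :: complex fps) $ 0 = 0" using m by simp
  have "(Fm m oo fps_X ^ m) * (inverse (Fm m) oo fps_X ^ m) = (Fm m * inverse (Fm m)) oo fps_X ^ m"
    by (rule fps_compose_mult_distrib[OF X0, symmetric])
  also have "Fm m * inverse (Fm m) = 1"
  proof -
    have "inverse (Fm m) * Fm m = 1" by (intro inverse_mult_eq_1) (simp add: Fm0)
    then show ?thesis by (simp add: mult.commute)
  qed
  finally have 1: "inverse (Fm m oo fps_X ^ m) = inverse (Fm m) oo fps_X ^ m"
    by (intro fps_inverse_unique) simp
  have "(\<Prod>p<m. Ee oo c p) * (\<Prod>p<m. Hh oo c p) = (\<Prod>p<m. (Ee * Hh) oo c p)"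
    by (simp add: prod.distrib[symmetric] fps_compose_mult_distrib[OF c0])
  also have "\<dots> = 1"
  proof -
    have EH: "Ee * Hh = 1" using HE by (simp add: mult.commute)
    show ?thesis by (simp add: EH)
  qed
  finally have 2: "inverse (\<Prod>p<m. Ee oo c p) = (\<Prod>p<m. Hh oo c p)"
    by (rule fps_inverse_unique)
  have "inverse (Fm m) oo fps_X ^ m = (\<Prod>p<m. Hh oo c p)"
    using 1 2 Fm_comp[OF m] by (simp add: c_def)
  then have "(inverse (Fm m) oo fps_X ^ m) $ (m * j) = (\<Prod>p<m. Hh oo c p) $ (m * j)" by simp
  then show ?thesis using m by (simp add: compXm_nth prod_fps_nth c_def lin_comp_nth)
qed


lemma merges_nonempty: "xs \<noteq> [] \<Longrightarrow> l \<in> set (merges xs) \<Longrightarrow> l \<noteq> []"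
  by (induction xs arbitrary: l rule: merges.induct) auto

lemma merges_map:
  assumes add: "\<And>a b. f (a + b) = f a + f b"
  shows "merges (map f xs) = map (map f) (merges xs)"
proof (induction xs rule: merges.induct)
  case (3 a b rest)
  have ne: "l \<in> set (merges (b # rest)) \<Longrightarrow> l \<noteq> []" for l by (rule merges_nonempty) auto
  have "map (\<lambda>l. (f a + hd l) # tl l) (map (map f) (merges (b # rest)))
      = map (map f) (map (\<lambda>l. (a + hd l) # tl l) (merges (b # rest)))"
    by (auto simp: add ne hd_map map_tl)
  then show ?case using 3 by simp
qed auto

lemma mzv_t_expand:
  fixes m n :: nat
  assumes "length ks = n"
  shows "mzv_t t (map (\<lambda>x. 2 * m * x) ks)
       = sum_list (map (\<lambda>p. t ^ (n - length p) * complex_of_real (mzv (map (\<lambda>x. 2 * m * x) p))) (merges ks))"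
proof -
  have "merges (map (\<lambda>x. 2 * m * x) ks) = map (map (\<lambda>x. 2 * m * x)) (merges ks)"
    by (rule merges_map) (simp add: algebra_simps)
  then show ?thesis using assms by (simp add: mzv_t_def o_def)
qed

lemma LHS_expand:
  fixes m n k :: nat and t :: complex
  assumes "n \<ge> 1"
  shows "(\<Sum>ks \<in> {ks. length ks = n \<and> (\<forall>x\<in>set ks. x \<ge> 1) \<and> sum_list ks = k}.
            mzv_t t (map (\<lambda>x. 2 * m * x) ks))
       = (\<Sum>r=1..n. of_nat ((k - r) choose (n - r)) *
            (t ^ (n - r) * (\<Sum>p\<in>comp k r. complex_of_real (mzv (map (\<lambda>x. 2 * m * x) p)))))"
proof -
  define \<psi> where "\<psi> p = t ^ (n - length p) * complex_of_real (mzv (map (\<lambda>x. 2 * m * x) p))" for p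
  have "(\<Sum>ks \<in> {ks. length ks = n \<and> (\<forall>x\<in>set ks. x \<ge> 1) \<and> sum_list ks = k}.
            mzv_t t (map (\<lambda>x. 2 * m * x) ks))
       = (\<Sum>ks\<in>comp k n. sum_list (map \<psi> (merges ks)))"
    unfolding comp_def \<psi>_def by (intro sum.cong refl mzv_t_expand) auto
  also have "\<dots> = (\<Sum>r=1..n. of_nat ((k - r) choose (n - r)) * (\<Sum>p\<in>comp k r. \<psi> p))"
    by (rule merges_sum[OF assms])
  also have "\<dots> = (\<Sum>r=1..n. of_nat ((k - r) choose (n - r)) *
            (t ^ (n - r) * (\<Sum>p\<in>comp k r. complex_of_real (mzv (map (\<lambda>x. 2 * m * x) p)))))"
    by (intro sum.cong refl arg_cong2[where f="(*)"])
       (auto simp: \<psi>_def sum_distrib_left comp_def intro!: sum.cong)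
  finally show ?thesis .
qed

lemma comp_mzv_formula:
  assumes m: "m \<ge> 1"
  shows "(\<Sum>p\<in>comp k r. complex_of_real (mzv (map (\<lambda>x. 2 * m * x) p)))
       = (\<Sum>j=0..k. inverse (Fm m) $ j * ((-1) ^ r * of_nat ((k - j) choose r) * fco m (k - j)))"
proof -
  have 1: "(\<lambda>N. complex_of_real (SN (2 * m) N k r))
      \<longlonglongrightarrow> (\<Sum>p\<in>comp k r. complex_of_real (mzv (map (\<lambda>x. 2 * m * x) p)))"
    unfolding SN_def of_real_sum
  proof (intro tendsto_sum tendsto_of_real mzv_limit ballI)
    fix p x assume "p \<in> comp k r" "x \<in> set (map (\<lambda>x. 2 * m * x) p)"
    then obtain y where "y \<in> set p" "x = 2 * m * y" by auto
    moreover have "y \<ge> 1" using \<open>p \<in> comp k r\<close> \<open>y \<in> set p\<close> by (auto simp: comp_def)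
    ultimately show "x \<ge> 2" using m by (simp add: mult_le_mono)
  qed
  have 2: "(\<lambda>N. (\<Sum>j=0..k. inverse (FN (2 * m) N) $ j * ((-1) ^ r * of_nat ((k - j) choose r) * FN (2 * m) N $ (k - j))))
      \<longlonglongrightarrow> (\<Sum>j=0..k. inverse (Fm m) $ j * ((-1) ^ r * of_nat ((k - j) choose r) * fco m (k - j)))"
  proof (intro tendsto_sum tendsto_mult tendsto_const FN_lim[OF m])
    fix j
    show "(\<lambda>N. inverse (FN (2 * m) N) $ j) \<longlonglongrightarrow> inverse (Fm m) $ j"
    proof (rule inv_lim)
      show "(\<lambda>N. FN (2 * m) N $ l) \<longlonglongrightarrow> Fm m $ l" for l
        unfolding Fm_def fps_nth_Abs_fps by (rule FN_lim[OF m])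
    qed (auto simp: Fm0)
  qed
  show ?thesis using 1 2 unfolding SN_formula by (rule LIMSEQ_unique)
qed


definition rho :: "nat \<Rightarrow> complex" where "rho m = exp (complex_of_real pi * \<i> / of_nat m)"

definition Rj :: "nat \<Rightarrow> nat \<Rightarrow> complex" where
  "Rj m j = (\<Sum>ns\<in>Lm m (m * j). \<Prod>p<m. complex_of_real (beta2 (ns ! p) / fact (2 * (ns ! p))) * omega m ^ (p * (ns ! p)))"

definition Ql :: "nat \<Rightarrow> nat \<Rightarrow> complex" where
  "Ql m l = (\<Sum>ls\<in>Lm m (m * l). \<Prod>p<m. complex_of_real (1 / fact (2 * (ls ! p) + 1)) * omega m ^ (p * (ls ! p)))"

lemma rho_sq: "m \<ge> 1 \<Longrightarrow> rho m ^ 2 = omega m"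
proof -
  assume m: "m \<ge> 1"
  have "rho m ^ 2 = exp (of_nat 2 * (complex_of_real pi * \<i> / of_nat m))"
    unfolding rho_def by (rule exp_of_nat_mult[symmetric])
  also have "\<dots> = exp (\<i> * complex_of_real (2 * pi / real m))"
    by (simp add: field_simps)
  also have "\<dots> = omega m" by (simp add: omega_def cis_conv_exp)
  finally show ?thesis .
qed

lemma rho_pow: "m \<ge> 1 \<Longrightarrow> rho m ^ (2 * p * x) = omega m ^ (p * x)"
  by (simp add: power_mult rho_sq[symmetric] mult.assoc)

lemma prod_pow_Lm: "ls \<in> Lm m S \<Longrightarrow> (\<Prod>p<m. (c :: complex) ^ (ls ! p)) = c ^ S"
  by (auto simp: Lm_def power_sum[symmetric] sum_list_sum_nth atLeast0LessThan)

lemma fco_closed2: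
  assumes m: "m \<ge> 1"
  shows "fco m l = (-1) ^ (m * l) * complex_of_real pi ^ (2 * (m * l)) * Ql m l"
proof -
  have "fco m l = (\<Sum>ls\<in>Lm m (m * l). \<Prod>p<m. (omega m ^ p) ^ (ls ! p) * Ee $ (ls ! p))"
    by (rule fco_closed[OF m])
  also have "\<dots> = (\<Sum>ls\<in>Lm m (m * l). (-1) ^ (m * l) * complex_of_real pi ^ (2 * (m * l)) *
      (\<Prod>p<m. complex_of_real (1 / fact (2 * (ls ! p) + 1)) * omega m ^ (p * (ls ! p))))"
  proof (rule sum.cong[OF refl])
    fix ls assume ls: "ls \<in> Lm m (m * l)"
    have "(\<Prod>p<m. (omega m ^ p) ^ (ls ! p) * Ee $ (ls ! p))
        = (\<Prod>p<m. (-1) ^ (ls ! p)) * (\<Prod>p<m. (complex_of_real pi ^ 2) ^ (ls ! p)) *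
          (\<Prod>p<m. complex_of_real (1 / fact (2 * (ls ! p) + 1)) * omega m ^ (p * (ls ! p)))"
      by (simp add: prod.distrib[symmetric] EeQ Qs_def power_mult mult_ac power_mult_distrib
           flip: power_mult)
    also have "\<dots> = (-1) ^ (m * l) * complex_of_real pi ^ (2 * (m * l)) *
          (\<Prod>p<m. complex_of_real (1 / fact (2 * (ls ! p) + 1)) * omega m ^ (p * (ls ! p)))"
      by (simp add: prod_pow_Lm[OF ls] power_mult)
    finally show "(\<Prod>p<m. (omega m ^ p) ^ (ls ! p) * Ee $ (ls ! p)) = \<dots>" .
  qed
  also have "\<dots> = (-1) ^ (m * l) * complex_of_real pi ^ (2 * (m * l)) * Ql m l"
    by (simp add: Ql_def sum_distrib_left)
  finally show ?thesis .
qed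

lemma g_closed2:
  assumes m: "m \<ge> 1"
  shows "inverse (Fm m) $ j = (-1) ^ (m * j) * complex_of_real pi ^ (2 * (m * j)) * Rj m j"
proof -
  have "inverse (Fm m) $ j = (\<Sum>ns\<in>Lm m (m * j). \<Prod>p<m. (omega m ^ p) ^ (ns ! p) * Hh $ (ns ! p))"
    by (rule g_closed[OF m])
  also have "\<dots> = (\<Sum>ns\<in>Lm m (m * j). (-1) ^ (m * j) * complex_of_real pi ^ (2 * (m * j)) *
      (\<Prod>p<m. complex_of_real (beta2 (ns ! p) / fact (2 * (ns ! p))) * omega m ^ (p * (ns ! p))))"
  proof (rule sum.cong[OF refl])
    fix ns assume ns: "ns \<in> Lm m (m * j)"
    have "(\<Prod>p<m. (omega m ^ p) ^ (ns ! p) * Hh $ (ns ! p))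
        = (\<Prod>p<m. (-1) ^ (ns ! p)) * (\<Prod>p<m. (complex_of_real pi ^ 2) ^ (ns ! p)) *
          (\<Prod>p<m. complex_of_real (beta2 (ns ! p) / fact (2 * (ns ! p))) * omega m ^ (p * (ns ! p)))"
      by (simp add: prod.distrib[symmetric] HhP Pb_def power_mult mult_ac power_mult_distrib
           flip: power_mult)
    also have "\<dots> = (-1) ^ (m * j) * complex_of_real pi ^ (2 * (m * j)) *
          (\<Prod>p<m. complex_of_real (beta2 (ns ! p) / fact (2 * (ns ! p))) * omega m ^ (p * (ns ! p)))"
      by (simp add: prod_pow_Lm[OF ns] power_mult)
    finally show "(\<Prod>p<m. (omega m ^ p) ^ (ns ! p) * Hh $ (ns ! p)) = \<dots>" .
  qed
  also have "\<dots> = (-1) ^ (m * j) * complex_of_real pi ^ (2 * (m * j)) * Rj m j"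
    by (simp add: Rj_def sum_distrib_left)
  finally show ?thesis .
qed

lemma inner_formula:
  assumes m: "m \<ge> 1"
  shows "(\<Sum>j=0..k. inverse (Fm m) $ j * ((-1) ^ r * of_nat ((k - j) choose r) * fco m (k - j)))
       = (-1) ^ r * ((-1) ^ (k * m) * complex_of_real pi ^ (2 * k * m)) *
         (\<Sum>j=0..k-r. of_nat ((k - j) choose r) * (Rj m j * Ql m (k - j)))"
proof -
  have "(\<Sum>j=0..k. inverse (Fm m) $ j * ((-1) ^ r * of_nat ((k - j) choose r) * fco m (k - j)))
      = (\<Sum>j=0..k-r. inverse (Fm m) $ j * ((-1) ^ r * of_nat ((k - j) choose r) * fco m (k - j)))"
  proof (rule sum.mono_neutral_right)
    show "\<forall>j\<in>{0..k} - {0..k - r}. inverse (Fm m) $ j * ((-1) ^ r * of_nat ((k - j) choose r) * fco m (k - j)) = 0"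
    proof
      fix j assume "j \<in> {0..k} - {0..k - r}"
      then have "k - j < r" by auto
      then show "inverse (Fm m) $ j * ((-1) ^ r * of_nat ((k - j) choose r) * fco m (k - j)) = 0"
        by (simp add: binomial_eq_0)
    qed
  qed auto
  also have "\<dots> = (\<Sum>j=0..k-r. (-1) ^ r * ((-1) ^ (k * m) * complex_of_real pi ^ (2 * k * m)) *
         (of_nat ((k - j) choose r) * (Rj m j * Ql m (k - j))))"
  proof (rule sum.cong[OF refl])
    fix j assume j: "j \<in> {0..k-r}"
    then have jk: "j \<le> k" by auto
    have e1: "(-1 :: complex) ^ (m * j) * (-1) ^ (m * (k - j)) = (-1) ^ (k * m)"
    proof -
      have "m * j + m * (k - j) = m * (j + (k - j))" by (simp only: add_mult_distrib2)
      also have "j + (k - j) = k" using jk by simp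
      finally have "m * j + m * (k - j) = k * m" by (simp add: mult.commute)
      then show ?thesis by (simp only: power_add[symmetric])
    qed
    have e2: "complex_of_real pi ^ (2 * (m * j)) * complex_of_real pi ^ (2 * (m * (k - j))) = complex_of_real pi ^ (2 * k * m)"
    proof -
      have "2 * (m * j) + 2 * (m * (k - j)) = 2 * k * m" using jk
        by (simp add: algebra_simps diff_mult_distrib2[symmetric] add_mult_distrib2[symmetric])
      then show ?thesis by (simp only: power_add[symmetric])
    qed
    show "inverse (Fm m) $ j * ((-1) ^ r * of_nat ((k - j) choose r) * fco m (k - j))
        = (-1) ^ r * ((-1) ^ (k * m) * complex_of_real pi ^ (2 * k * m)) *
         (of_nat ((k - j) choose r) * (Rj m j * Ql m (k - j)))"
      unfolding g_closed2[OF m] fco_closed2[OF m] e1[symmetric] e2[symmetric] by (simp add: mult_ac)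
  qed
  also have "\<dots> = (-1) ^ r * ((-1) ^ (k * m) * complex_of_real pi ^ (2 * k * m)) *
         (\<Sum>j=0..k-r. of_nat ((k - j) choose r) * (Rj m j * Ql m (k - j)))"
    by (simp add: sum_distrib_left)
  finally show ?thesis .
qed

lemma Xj_formula:
  assumes m: "m \<ge> 1"
  shows "(\<Sum>ns \<in> {ns. length ns = m \<and> sum_list ns = m * j}.
            \<Sum>ls \<in> {ls. length ls = m \<and> sum_list ls = m * (k - j)}.
              (\<Prod>p<m. complex_of_real (beta2 (ns ! p)
                   / (fact (2 * (ns ! p)) * fact (2 * (ls ! p) + 1))))
              * exp (complex_of_real pi * \<i> / of_nat m)
                  ^ (\<Sum>p<m. 2 * p * (ns ! p + ls ! p)))
       = Rj m j * Ql m (k - j)"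
proof -
  have "(\<Prod>p<m. complex_of_real (beta2 (ns ! p) / (fact (2 * (ns ! p)) * fact (2 * (ls ! p) + 1))))
              * exp (complex_of_real pi * \<i> / of_nat m) ^ (\<Sum>p<m. 2 * p * (ns ! p + ls ! p))
      = (\<Prod>p<m. complex_of_real (beta2 (ns ! p) / fact (2 * (ns ! p))) * omega m ^ (p * (ns ! p))) *
        (\<Prod>p<m. complex_of_real (1 / fact (2 * (ls ! p) + 1)) * omega m ^ (p * (ls ! p)))" for ns ls
  proof -
    have "exp (complex_of_real pi * \<i> / of_nat m) ^ (\<Sum>p<m. 2 * p * (ns ! p + ls ! p))
        = (\<Prod>p<m. omega m ^ (p * (ns ! p)) * omega m ^ (p * (ls ! p)))"
      unfolding rho_def[symmetric] power_sum
      by (intro prod.cong refl) (simp add: rho_pow[OF m, symmetric] power_add[symmetric] algebra_simps)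
    then show ?thesis
      by (simp add: prod.distrib[symmetric] mult_ac)
  qed
  then show ?thesis
    by (simp add: Rj_def Ql_def Lm_def sum_product)
qed


theorem theorem4p12:
  fixes k n m :: nat and t :: complex
  assumes "k \<ge> 1" "n \<ge> 1" "m \<ge> 1" "k \<ge> n"
  shows "(\<Sum>ks \<in> {ks. length ks = n \<and> (\<forall>x\<in>set ks. x \<ge> 1) \<and> sum_list ks = k}.
            mzv_t t (map (\<lambda>x. 2 * m * x) ks))
       = (\<Sum>i = 1..n.
            (\<Sum>j = 0..k - i. of_nat ((k - j) choose i) *
               (\<Sum>ns \<in> {ns. length ns = m \<and> sum_list ns = m * j}.
                 \<Sum>ls \<in> {ls. length ls = m \<and> sum_list ls = m * (k - j)}.
                   (\<Prod>p<m. complex_of_real (beta2 (ns ! p)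
                        / (fact (2 * (ns ! p)) * fact (2 * (ls ! p) + 1))))
                   * exp (complex_of_real pi * \<i> / of_nat m)
                       ^ (\<Sum>p<m. 2 * p * (ns ! p + ls ! p))))
            * (-1) ^ i * of_nat ((k - i) choose (k - n)) * t ^ (n - i))
         * (2 * complex_of_real pi * \<i>) ^ (2 * k * m) / 4 ^ (k * m)"
proof -
  have m1: "m \<ge> 1" and n1: "n \<ge> 1" and kn: "k \<ge> n" using assms by auto
  define c where "c = (-1) ^ (k * m) * complex_of_real pi ^ (2 * k * m)"
  have lam: "(2 * complex_of_real pi * \<i>) ^ (2 * k * m) / 4 ^ (k * m) = c"
  proof -
    have sq: "(2 * complex_of_real pi * \<i>) ^ 2 = (-1) * (4 * complex_of_real pi ^ 2)"
      by (simp add: power_mult_distrib)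
    have "(2 * complex_of_real pi * \<i>) ^ (2 * k * m) = ((2 * complex_of_real pi * \<i>) ^ 2) ^ (k * m)"
      by (simp add: power_mult mult.assoc)
    also have "\<dots> = ((-1) * (4 * complex_of_real pi ^ 2)) ^ (k * m)"
      by (simp only: sq)
    also have "\<dots> = (-1) ^ (k * m) * 4 ^ (k * m) * (complex_of_real pi ^ 2) ^ (k * m)"
      by (simp only: power_mult_distrib mult.assoc)
    finally show ?thesis
      by (simp add: c_def power_mult[symmetric] mult.assoc)
  qed
  have S: "(\<Sum>p\<in>comp k r. complex_of_real (mzv (map (\<lambda>x. 2 * m * x) p)))
      = (-1) ^ r * c * (\<Sum>j=0..k-r. of_nat ((k - j) choose r) * (Rj m j * Ql m (k - j)))" for r
    unfolding comp_mzv_formula[OF m1] inner_formula[OF m1] c_def by (simp add: mult.assoc)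
  have X: "(\<Sum>j = 0..k - i. of_nat ((k - j) choose i) *
               (\<Sum>ns \<in> {ns. length ns = m \<and> sum_list ns = m * j}.
                 \<Sum>ls \<in> {ls. length ls = m \<and> sum_list ls = m * (k - j)}.
                   (\<Prod>p<m. complex_of_real (beta2 (ns ! p)
                        / (fact (2 * (ns ! p)) * fact (2 * (ls ! p) + 1))))
                   * exp (complex_of_real pi * \<i> / of_nat m)
                       ^ (\<Sum>p<m. 2 * p * (ns ! p + ls ! p))))
      = (\<Sum>j=0..k-i. of_nat ((k - j) choose i) * (Rj m j * Ql m (k - j)))" for i
    by (intro sum.cong refl arg_cong2[where f="(*)"] Xj_formula[OF m1])
  have B: "(k - i) choose (n - i) = (k - i) choose (k - n)" if "i \<in> {1..n}" for i
  proof -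
    have "n - i \<le> k - i" using that kn by auto
    then have "(k - i) choose (n - i) = (k - i) choose ((k - i) - (n - i))" by (rule binomial_symmetric)
    also have "(k - i) - (n - i) = k - n" using that kn by auto
    finally show ?thesis .
  qed
  have "(\<Sum>ks \<in> {ks. length ks = n \<and> (\<forall>x\<in>set ks. x \<ge> 1) \<and> sum_list ks = k}.
            mzv_t t (map (\<lambda>x. 2 * m * x) ks))
      = (\<Sum>r=1..n. of_nat ((k - r) choose (n - r)) *
            (t ^ (n - r) * ((-1) ^ r * c * (\<Sum>j=0..k-r. of_nat ((k - j) choose r) * (Rj m j * Ql m (k - j))))))"
    unfolding LHS_expand[OF n1] S ..
  also have "\<dots> = (\<Sum>i=1..n. ((\<Sum>j=0..k-i. of_nat ((k - j) choose i) * (Rj m j * Ql m (k - j)))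
            * (-1) ^ i * of_nat ((k - i) choose (k - n)) * t ^ (n - i)) * c)"
    by (intro sum.cong refl) (simp add: B mult_ac)
  also have "\<dots> = (\<Sum>i=1..n. (\<Sum>j=0..k-i. of_nat ((k - j) choose i) * (Rj m j * Ql m (k - j)))
            * (-1) ^ i * of_nat ((k - i) choose (k - n)) * t ^ (n - i)) * c"
    by (rule sum_distrib_right[symmetric])
  finally show ?thesis unfolding X by (simp only: lam[symmetric] times_divide_eq_right)
qed


end
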